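(* Let $N\ge 1$ and let $d<d'$ with $d\in\mathbb{N}$ and $d'\in\mathbb{N}\cup\{\infty\}$. Let $\lambda=(\lambda_1,\ldots,\lambda_d)$ with $1\ge\lambda_1\ge\cdots\ge\lambda_d\ge 0$ and $\sum_i\lambda_i=N$. Then $\lambda$ is compatible with respect to $\wedge^N[\mathcal{H}_d]$ if and only if $(\lambda_1,\ldots,\lambda_d,0,\ldots,0)$ (padded with $d'-d$ zeros) is compatible with respect to $\wedge^N[\mathcal{H}_{d'}]$. Equivalently, denoting by $\mathcal{P}_{N,k}$ the set of spectra compatible with respect to $\wedge^N[\mathcal{H}_k]$, one has $\mathcal{P}_{N,d}=\mathcal{P}_{N,d'}\cap\{\lambda_{d+1}=\lambda_{d+2}=\cdots=0\}$ (identifying a vector of length $d$ with its zero-padding).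
   Context: For $k\in\mathbb{N}\cup\{\infty\}$, $\mathcal{H}_k$ denotes a $k$-dimensional separable complex Hilbert space (the one-particle space), with $\mathcal{H}_d$ embedded as a subspace of $\mathcal{H}_{d'}$, and $\wedge^N[\mathcal{H}_k]$ the $N$-fold antisymmetric tensor power (the $N$-fermion space). For a normalized $|\Psi\rangle\in\wedge^N[\mathcal{H}_k]$, its one-particle reduced density operator is $\rho_1=N\,\mathrm{tr}_{N-1}[|\Psi\rangle\langle\Psi|]$ (partial trace over $N-1$ of the particles), normalized so that $\mathrm{tr}\rho_1=N$; its eigenvalues, listed in non-increasing order with multiplicity, are the natural occupation numbers. A vector $\lambda=(\lambda_1,\ldots,\lambda_k)$ with $1\ge\lambda_1\ge\lambda_2\ge\cdots\ge 0$ and $\sum\lambda_i=N$ is called compatible with respect to $\wedge^N[\mathcal{H}_k]$ if it is the ordered spectrum of $\rho_1$ for some normalized pure state $|\Psi\rangle\in\wedge^N[\mathcal{H}_k]$. *)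

theory Defs
  imports "HOL-Analysis.Analysis" "HOL-Combinatorics.Permutations"
begin

text \<open>One-particle space H_k realised as l^2 over the index set of basis labels
  {i. i < k}, with k :: enat (k = infinity allowed).  Vectors are functions
  nat => complex vanishing outside the index set.\<close>

definition idx :: "enat \<Rightarrow> nat set" where
  "idx k = {i. enat i < k}"

definition is_vec :: "enat \<Rightarrow> (nat \<Rightarrow> complex) \<Rightarrow> bool" where
  "is_vec k v \<longleftrightarrow> (\<forall>i. i \<notin> idx k \<longrightarrow> v i = 0) \<and> (\<lambda>i. (norm (v i))\<^sup>2) summable_on idx k"

definition inner_k :: "enat \<Rightarrow> (nat \<Rightarrow> complex) \<Rightarrow> (nat \<Rightarrow> complex) \<Rightarrow> complex" where
  "inner_k k u v = infsum (\<lambda>i. cnj (u i) * v i) (idx k)"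

text \<open>N-particle tensor space H_k^{otimes N} as l^2 over index tuples (lists of
  length N with entries in idx k); the wedge power is the antisymmetric part.\<close>

definition tuples :: "nat \<Rightarrow> enat \<Rightarrow> nat list set" where
  "tuples n k = {xs. length xs = n \<and> set xs \<subseteq> idx k}"

definition fermion_state :: "nat \<Rightarrow> enat \<Rightarrow> (nat list \<Rightarrow> complex) \<Rightarrow> bool" where
  "fermion_state N k \<Psi> \<longleftrightarrow>
     (\<forall>xs. xs \<notin> tuples N k \<longrightarrow> \<Psi> xs = 0) \<and>
     (\<forall>xs p. length xs = N \<longrightarrow> p permutes {..<N} \<longrightarrow>
         \<Psi> (permute_list p xs) = of_int (sign p) * \<Psi> xs) \<and>
     ((\<lambda>xs. (norm (\<Psi> xs))\<^sup>2) has_sum 1) (tuples N k)"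

text \<open>One-particle reduced density operator rho_1 = N tr_{N-1} |Psi><Psi|,
  given by its matrix elements <i|rho_1|j> (trace over particles 2..N).\<close>

definition rdm1 :: "nat \<Rightarrow> enat \<Rightarrow> (nat list \<Rightarrow> complex) \<Rightarrow> nat \<Rightarrow> nat \<Rightarrow> complex" where
  "rdm1 N k \<Psi> i j = of_nat N * infsum (\<lambda>ys. \<Psi> (i # ys) * cnj (\<Psi> (j # ys))) (tuples (N - 1) k)"

definition apply_op :: "enat \<Rightarrow> (nat \<Rightarrow> nat \<Rightarrow> complex) \<Rightarrow> (nat \<Rightarrow> complex) \<Rightarrow> nat \<Rightarrow> complex" where
  "apply_op k A v = (\<lambda>i. if i \<in> idx k then infsum (\<lambda>j. A i j * v j) (idx k) else 0)"

definition eigenspace_k :: "enat \<Rightarrow> (nat \<Rightarrow> nat \<Rightarrow> complex) \<Rightarrow> real \<Rightarrow> (nat \<Rightarrow> complex) set" where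
  "eigenspace_k k A \<mu> = {v. is_vec k v \<and> apply_op k A v = (\<lambda>i. complex_of_real \<mu> * v i)}"

text \<open>Multiplicity of mu as an eigenvalue (Hilbert dimension of the eigenspace):
  an orthonormal family of n vectors exists in the eigenspace.\<close>

definition has_orthonormal_family :: "enat \<Rightarrow> (nat \<Rightarrow> complex) set \<Rightarrow> nat \<Rightarrow> bool" where
  "has_orthonormal_family k E n \<longleftrightarrow>
     (\<exists>e :: nat \<Rightarrow> nat \<Rightarrow> complex. (\<forall>a<n. e a \<in> E) \<and>
        (\<forall>a<n. \<forall>b<n. inner_k k (e a) (e b) = (if a = b then 1 else 0)))"

text \<open>lam (restricted to indices < k) is the ordered spectrum (eigenvalues in
  non-increasing order, with multiplicity) of the positive operator A: it is
  non-increasing and non-negative, and each positive value occurs in lam exactly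
  as often as its multiplicity as an eigenvalue of A (the remaining entries are
  the zeros).\<close>

definition ordered_spectrum :: "enat \<Rightarrow> (nat \<Rightarrow> nat \<Rightarrow> complex) \<Rightarrow> (nat \<Rightarrow> real) \<Rightarrow> bool" where
  "ordered_spectrum k A lam \<longleftrightarrow>
     (\<forall>i j. i \<le> j \<longrightarrow> enat j < k \<longrightarrow> lam j \<le> lam i) \<and>
     (\<forall>i. enat i < k \<longrightarrow> 0 \<le> lam i) \<and>
     (\<forall>\<mu>>0. \<forall>n. has_orthonormal_family k (eigenspace_k k A \<mu>) n \<longleftrightarrow>
                 (\<exists>F. F \<subseteq> {i. enat i < k \<and> lam i = \<mu>} \<and> finite F \<and> card F = n))"

definition compatible :: "nat \<Rightarrow> enat \<Rightarrow> (nat \<Rightarrow> real) \<Rightarrow> bool" where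
  "compatible N k lam \<longleftrightarrow> (\<exists>\<Psi>. fermion_state N k \<Psi> \<and> ordered_spectrum k (rdm1 N k \<Psi>) lam)"

definition pad :: "nat \<Rightarrow> (nat \<Rightarrow> real) \<Rightarrow> nat \<Rightarrow> real" where
  "pad d lam i = (if i < d then lam i else 0)"

end

theory Submission
  imports Defs
begin


lemma summable_on_sum_fin:
  fixes g :: "'i \<Rightarrow> 'a \<Rightarrow> 'b::{topological_comm_monoid_add}"
  assumes "finite P" "\<And>p. p \<in> P \<Longrightarrow> g p summable_on A"
  shows "(\<lambda>x. \<Sum>p\<in>P. g p x) summable_on A"
  using assms
proof (induction P rule: finite_induct)
  case empty then show ?case by (simp add: summable_on_0)
next
  case (insert a F)
  then show ?case by (simp add: summable_on_add)
qed

lemma infsum_sum_fin: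
  fixes g :: "'i \<Rightarrow> 'a \<Rightarrow> 'b::{topological_comm_monoid_add, t2_space}"
  assumes "finite P" "\<And>p. p \<in> P \<Longrightarrow> g p summable_on A"
  shows "infsum (\<lambda>x. \<Sum>p\<in>P. g p x) A = (\<Sum>p\<in>P. infsum (g p) A)"
  using assms
proof (induction P rule: finite_induct)
  case empty then show ?case by simp
next
  case (insert a F)
  have "infsum (\<lambda>x. \<Sum>p\<in>insert a F. g p x) A = infsum (\<lambda>x. g a x + (\<Sum>p\<in>F. g p x)) A"
    using insert by simp
  also have "\<dots> = infsum (g a) A + infsum (\<lambda>x. \<Sum>p\<in>F. g p x) A"
    using insert by (intro infsum_add summable_on_sum_fin) auto
  finally show ?case using insert by simp
qed

lemma summable_on_diff:
  fixes f g :: "'a \<Rightarrow> 'b::{topological_ab_group_add}"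
  assumes "f summable_on A" "g summable_on A"
  shows "(\<lambda>x. f x - g x) summable_on A"
proof -
  have "(\<lambda>x. f x + - g x) summable_on A"
    using assms by (intro summable_on_add) (auto simp: summable_on_uminus)
  then show ?thesis by simp
qed

lemma infsum_diff:
  fixes f g :: "'a \<Rightarrow> 'b::{topological_ab_group_add, t2_space}"
  assumes "f summable_on A" "g summable_on A"
  shows "infsum (\<lambda>x. f x - g x) A = infsum f A - infsum g A"
proof -
  have "infsum (\<lambda>x. f x + - g x) A = infsum f A + infsum (\<lambda>x. - g x) A"
    using assms by (intro infsum_add) (auto simp: summable_on_uminus)
  then show ?thesis by (simp add: infsum_uminus)
qed

section \<open>l2 algebra\<close>

definition l2 :: "'a set \<Rightarrow> ('a \<Rightarrow> complex) \<Rightarrow> bool" where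
  "l2 A f \<longleftrightarrow> (\<lambda>x. (norm (f x))\<^sup>2) summable_on A"

definition ip :: "'a set \<Rightarrow> ('a \<Rightarrow> complex) \<Rightarrow> ('a \<Rightarrow> complex) \<Rightarrow> complex" where
  "ip A u v = infsum (\<lambda>x. cnj (u x) * v x) A"

lemma l2_prod_summable:
  assumes "l2 A f" "l2 A g"
  shows "(\<lambda>x. f x * g x) summable_on A"
proof -
  have s: "(\<lambda>x. ((norm (f x))\<^sup>2 + (norm (g x))\<^sup>2) / 2) summable_on A"
    using assms unfolding l2_def divide_inverse
    by (intro summable_on_cmult_left summable_on_add) auto
  have "(\<lambda>x. norm (f x * g x)) summable_on A"
  proof (rule Infinite_Sum.abs_summable_on_comparison_test'[OF s])
    fix x
    have "2 * (norm (f x) * norm (g x)) \<le> (norm (f x))\<^sup>2 + (norm (g x))\<^sup>2"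
      using sum_squares_bound[of "norm (f x)" "norm (g x)"] by simp
    then show "norm (f x * g x) \<le> ((norm (f x))\<^sup>2 + (norm (g x))\<^sup>2) / 2"
      by (simp add: norm_mult)
  qed
  then show ?thesis
    using summable_on_iff_abs_summable_on_complex by blast
qed

lemma l2_cnj: "l2 A (\<lambda>x. cnj (f x)) \<longleftrightarrow> l2 A f"
  by (simp add: l2_def)

lemma l2_ip_summable:
  assumes "l2 A f" "l2 A g"
  shows "(\<lambda>x. cnj (f x) * g x) summable_on A"
  using l2_prod_summable[of A "\<lambda>x. cnj (f x)" g] assms by (simp add: l2_cnj)

lemma l2_cmult: "l2 A f \<Longrightarrow> l2 A (\<lambda>x. c * f x)"
  unfolding l2_def by (simp add: norm_mult power_mult_distrib summable_on_cmult_right)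

lemma l2_add:
  assumes "l2 A f" "l2 A g"
  shows "l2 A (\<lambda>x. f x + g x)"
proof -
  have s: "(\<lambda>x. 2 * (norm (f x))\<^sup>2 + 2 * (norm (g x))\<^sup>2) summable_on A"
    using assms unfolding l2_def
    by (intro summable_on_cmult_right summable_on_add) auto
  show ?thesis unfolding l2_def
  proof (rule summable_on_comparison_test[OF s])
    fix x
    have "norm (f x + g x) \<le> norm (f x) + norm (g x)" by (rule norm_triangle_ineq)
    then have "(norm (f x + g x))\<^sup>2 \<le> (norm (f x) + norm (g x))\<^sup>2"
      by (simp add: power_mono)
    also have "\<dots> \<le> 2 * (norm (f x))\<^sup>2 + 2 * (norm (g x))\<^sup>2"
      using sum_squares_bound[of "norm (f x)" "norm (g x)"] by (simp add: power2_sum)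
    finally show "(norm (f x + g x))\<^sup>2 \<le> 2 * (norm (f x))\<^sup>2 + 2 * (norm (g x))\<^sup>2" .
  qed auto
qed

lemma l2_uminus: "l2 A f \<Longrightarrow> l2 A (\<lambda>x. - f x)"
  unfolding l2_def by simp

lemma l2_diff:
  assumes "l2 A f" "l2 A g"
  shows "l2 A (\<lambda>x. f x - g x)"
  using l2_add[OF assms(1) l2_uminus[OF assms(2)]] by simp

lemma l2_sum:
  assumes "finite P" "\<And>p. p \<in> P \<Longrightarrow> l2 A (g p)"
  shows "l2 A (\<lambda>x. \<Sum>p\<in>P. g p x)"
  using assms
proof (induction P rule: finite_induct)
  case empty then show ?case by (simp add: l2_def summable_on_0)
next
  case (insert a F)
  then show ?case by (simp add: l2_add)
qed

lemma l2_subset: "l2 A f \<Longrightarrow> B \<subseteq> A \<Longrightarrow> l2 B f"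
  unfolding l2_def by (rule summable_on_subset_banach)

lemma l2_zero: "l2 A (\<lambda>x. 0)"
  by (simp add: l2_def summable_on_0)

lemma ip_cnj: "cnj (ip A u v) = ip A v u"
  unfolding ip_def by (simp flip: infsum_cnj add: mult.commute)

lemma ip_add_right:
  assumes "l2 A u" "l2 A v" "l2 A w"
  shows "ip A u (\<lambda>x. v x + w x) = ip A u v + ip A u w"
  unfolding ip_def using assms
  by (simp add: distrib_left infsum_add l2_ip_summable)

lemma ip_add_left:
  assumes "l2 A u" "l2 A v" "l2 A w"
  shows "ip A (\<lambda>x. u x + v x) w = ip A u w + ip A v w"
  unfolding ip_def using assms
  by (simp add: distrib_right infsum_add l2_ip_summable)

lemma ip_diff_right:
  assumes "l2 A u" "l2 A v" "l2 A w"
  shows "ip A u (\<lambda>x. v x - w x) = ip A u v - ip A u w"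
  unfolding ip_def using assms
  by (simp add: right_diff_distrib infsum_diff l2_ip_summable)

lemma ip_diff_left:
  assumes "l2 A u" "l2 A v" "l2 A w"
  shows "ip A (\<lambda>x. u x - v x) w = ip A u w - ip A v w"
  unfolding ip_def using assms
  by (simp add: left_diff_distrib infsum_diff l2_ip_summable)

lemma ip_cmult_right: "ip A u (\<lambda>x. c * v x) = c * ip A u v"
  unfolding ip_def
  by (simp add: mult.left_commute infsum_cmult_right')

lemma ip_cmult_left: "ip A (\<lambda>x. c * u x) v = cnj c * ip A u v"
  unfolding ip_def
  by (simp add: mult.assoc infsum_cmult_right')

lemma ip_sum_right:
  assumes "finite P" "l2 A u" "\<And>p. p \<in> P \<Longrightarrow> l2 A (g p)"
  shows "ip A u (\<lambda>x. \<Sum>p\<in>P. g p x) = (\<Sum>p\<in>P. ip A u (g p))"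
  unfolding ip_def using assms
  by (simp add: sum_distrib_left infsum_sum_fin l2_ip_summable)

lemma ip_sum_left:
  assumes "finite P" "l2 A u" "\<And>p. p \<in> P \<Longrightarrow> l2 A (g p)"
  shows "ip A (\<lambda>x. \<Sum>p\<in>P. g p x) u = (\<Sum>p\<in>P. ip A (g p) u)"
  unfolding ip_def using assms
  by (simp add: sum_distrib_right infsum_sum_fin l2_ip_summable)

lemma infsum_of_real_c:
  "infsum (\<lambda>x. complex_of_real (f x)) A = complex_of_real (infsum f A)"
proof (cases "f summable_on A")
  case True
  then show ?thesis by (intro infsumI has_sum_of_real has_sum_infsum)
next
  case False
  have "\<not> (\<lambda>x. complex_of_real (f x)) summable_on A"
  proof
    assume "(\<lambda>x. complex_of_real (f x)) summable_on A"
    from summable_on_Re[OF this] False show False by simp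
  qed
  then show ?thesis using False by (simp add: infsum_not_exists)
qed

definition nrm2 :: "'a set \<Rightarrow> ('a \<Rightarrow> complex) \<Rightarrow> real" where
  "nrm2 A f = infsum (\<lambda>x. (norm (f x))\<^sup>2) A"

lemma ip_self: "ip A v v = complex_of_real (nrm2 A v)"
proof -
  have "ip A v v = infsum (\<lambda>x. complex_of_real ((norm (v x))\<^sup>2)) A"
    unfolding ip_def by (intro infsum_cong) (metis complex_norm_square mult.commute)
  also have "\<dots> = complex_of_real (nrm2 A v)"
    unfolding nrm2_def
    by (rule infsum_of_real_c)
  finally show ?thesis .
qed



section \<open>Products of summable families\<close>

lemma real_prod_summable:
  fixes g :: "'a \<Rightarrow> real" and h :: "'b \<Rightarrow> real"
  assumes "g summable_on A" "h summable_on B" "\<And>a. a \<in> A \<Longrightarrow> g a \<ge> 0" "\<And>b. b \<in> B \<Longrightarrow> h b \<ge> 0"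
  shows "(\<lambda>(a,b). g a * h b) summable_on (A \<times> B)"
    and "infsum (\<lambda>(a,b). g a * h b) (A \<times> B) = infsum g A * infsum h B"
proof -
  have hs: "((\<lambda>b. g a * h b) has_sum (g a * infsum h B)) B" for a
    using assms(2) by (intro has_sum_cmult_right has_sum_infsum)
  have gs: "(\<lambda>a. g a * infsum h B) summable_on A"
    using assms(1) by (intro summable_on_cmult_left)
  have S: "(\<lambda>(a,b). g a * h b) summable_on Sigma A (\<lambda>_. B)"
    by (rule summable_on_SigmaI[where g="\<lambda>a. g a * infsum h B"])
       (use hs gs assms in auto)
  then show "(\<lambda>(a,b). g a * h b) summable_on (A \<times> B)" by simp
  have "infsum (\<lambda>(a,b). g a * h b) (A \<times> B) = infsum (\<lambda>a. infsum (\<lambda>b. g a * h b) B) A"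
    using S by (subst infsum_Sigma_banach[symmetric]) (auto simp: case_prod_unfold)
  also have "\<dots> = infsum (\<lambda>a. g a * infsum h B) A"
    by (simp add: infsum_cmult_right')
  also have "\<dots> = infsum g A * infsum h B"
    by (simp add: infsum_cmult_left')
  finally show "infsum (\<lambda>(a,b). g a * h b) (A \<times> B) = infsum g A * infsum h B" .
qed

lemma cplx_prod_summable:
  fixes g :: "'a \<Rightarrow> complex" and h :: "'b \<Rightarrow> complex"
  assumes "g summable_on A" "h summable_on B"
  shows "(\<lambda>(a,b). g a * h b) summable_on (A \<times> B)"
    and "infsum (\<lambda>(a,b). g a * h b) (A \<times> B) = infsum g A * infsum h B"
proof -
  have ga: "(\<lambda>a. norm (g a)) summable_on A" and hb: "(\<lambda>b. norm (h b)) summable_on B"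
    using assms summable_on_iff_abs_summable_on_complex by blast+
  have "(\<lambda>(a,b). norm (g a) * norm (h b)) summable_on (A \<times> B)"
    by (rule real_prod_summable(1)[OF ga hb]) auto
  then have "(\<lambda>x. norm ((\<lambda>(a,b). g a * h b) x)) summable_on (A \<times> B)"
    by (simp add: case_prod_unfold norm_mult)
  then show S: "(\<lambda>(a,b). g a * h b) summable_on (A \<times> B)"
    using summable_on_iff_abs_summable_on_complex by blast
  have "infsum (\<lambda>(a,b). g a * h b) (A \<times> B) = infsum (\<lambda>a. infsum (\<lambda>b. g a * h b) B) A"
    using S by (subst infsum_Sigma_banach[symmetric]) (auto simp: case_prod_unfold)
  also have "\<dots> = infsum (\<lambda>a. g a * infsum h B) A"
    by (simp add: infsum_cmult_right')
  also have "\<dots> = infsum g A * infsum h B"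
    by (simp add: infsum_cmult_left')
  finally show "infsum (\<lambda>(a,b). g a * h b) (A \<times> B) = infsum g A * infsum h B" .
qed

lemma l2_prod:
  assumes "l2 A g" "l2 B h"
  shows "l2 (A \<times> B) (\<lambda>(a,b). g a * h b)"
proof -
  have "(\<lambda>(a,b). (norm (g a))\<^sup>2 * (norm (h b))\<^sup>2) summable_on (A \<times> B)"
    using assms unfolding l2_def by (intro real_prod_summable(1)) auto
  then show ?thesis unfolding l2_def
    by (simp add: case_prod_unfold norm_mult power_mult_distrib)
qed

lemma tuples_Suc_Cons:
  "tuples (Suc n) k = (\<lambda>(i,ys). i # ys) ` (idx k \<times> tuples n k)"
  unfolding tuples_def
  by (auto simp: length_Suc_conv image_iff)

lemma inj_Cons_pair: "inj_on (\<lambda>(i,ys). i # ys) X"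
  by (auto simp: inj_on_def)

lemma tuples_Suc_snoc:
  "tuples (Suc n) k = (\<lambda>(ys,y). ys @ [y]) ` (tuples n k \<times> idx k)"
proof -
  have "xs \<in> (\<lambda>(ys,y). ys @ [y]) ` (tuples n k \<times> idx k)" if "xs \<in> tuples (Suc n) k" for xs
  proof -
    from that have "xs \<noteq> []" "length xs = Suc n" "set xs \<subseteq> idx k" by (auto simp: tuples_def)
    then have "xs = butlast xs @ [last xs]" "butlast xs \<in> tuples n k" "last xs \<in> idx k"
      by (auto simp: tuples_def dest: in_set_butlastD)
    then show ?thesis by (auto simp: image_iff)
  qed
  then show ?thesis by (auto simp: tuples_def)
qed

lemma inj_snoc_pair: "inj_on (\<lambda>(ys,y). ys @ [y]) X"
  by (auto simp: inj_on_def)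

lemma infsum_tuples_Suc:
  "infsum g (tuples (Suc n) k) = infsum (\<lambda>(i,ys). g (i # ys)) (idx k \<times> tuples n k)"
  by (simp only: tuples_Suc_Cons infsum_reindex[OF inj_Cons_pair]) (simp add: o_def case_prod_unfold)

lemma summable_tuples_Suc:
  "g summable_on (tuples (Suc n) k) \<longleftrightarrow> (\<lambda>(i,ys). g (i # ys)) summable_on (idx k \<times> tuples n k)"
  by (simp only: tuples_Suc_Cons summable_on_reindex[OF inj_Cons_pair]) (simp add: o_def case_prod_unfold)

lemma infsum_tuples_snoc:
  "infsum g (tuples (Suc n) k) = infsum (\<lambda>(ys,y). g (ys @ [y])) (tuples n k \<times> idx k)"
  by (simp only: tuples_Suc_snoc infsum_reindex[OF inj_snoc_pair]) (simp add: o_def case_prod_unfold)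

lemma summable_tuples_snoc:
  "g summable_on (tuples (Suc n) k) \<longleftrightarrow> (\<lambda>(ys,y). g (ys @ [y])) summable_on (tuples n k \<times> idx k)"
  by (simp only: tuples_Suc_snoc summable_on_reindex[OF inj_snoc_pair]) (simp add: o_def case_prod_unfold)

lemma tuples_0: "tuples 0 k = {[]}"
  by (auto simp: tuples_def)

definition TP :: "nat set \<Rightarrow> nat \<Rightarrow> nat list set" where
  "TP P n = {as. length as = n \<and> set as \<subseteq> P}"

lemma finite_TP: "finite P \<Longrightarrow> finite (TP P n)"
  unfolding TP_def using finite_lists_length_eq[of P n] by (metis (no_types, lifting) Collect_cong)

lemma TP_0: "TP P 0 = {[]}" by (auto simp: TP_def)

lemma TP_Suc: "TP P (Suc n) = (\<lambda>(a,as). a # as) ` (P \<times> TP P n)"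
  unfolding TP_def by (auto simp: length_Suc_conv image_iff)

lemma TP_Suc_snoc: "TP P (Suc n) = (\<lambda>(as,a). as @ [a]) ` (TP P n \<times> P)"
proof -
  have "xs \<in> (\<lambda>(as,a). as @ [a]) ` (TP P n \<times> P)" if "xs \<in> TP P (Suc n)" for xs
  proof -
    from that have "xs \<noteq> []" "length xs = Suc n" "set xs \<subseteq> P" by (auto simp: TP_def)
    then have "xs = butlast xs @ [last xs]" "butlast xs \<in> TP P n" "last xs \<in> P"
      by (auto simp: TP_def dest: in_set_butlastD)
    then show ?thesis by (auto simp: image_iff)
  qed
  then show ?thesis by (auto simp: TP_def)
qed

lemma sum_TP_Suc:
  assumes "finite P"
  shows "(\<Sum>as\<in>TP P (Suc n). g as) = (\<Sum>a\<in>P. \<Sum>as\<in>TP P n. g (a # as))"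
proof -
  have "(\<Sum>as\<in>TP P (Suc n). g as) = (\<Sum>x\<in>P \<times> TP P n. g (fst x # snd x))"
    unfolding TP_Suc by (subst sum.reindex[OF inj_Cons_pair]) (simp add: case_prod_unfold)
  also have "\<dots> = (\<Sum>a\<in>P. \<Sum>as\<in>TP P n. g (a # as))"
    by (simp add: sum.cartesian_product case_prod_unfold)
  finally show ?thesis .
qed

lemma sum_TP_snoc:
  assumes "finite P"
  shows "(\<Sum>as\<in>TP P (Suc n). g as) = (\<Sum>as\<in>TP P n. \<Sum>a\<in>P. g (as @ [a]))"
proof -
  have "(\<Sum>as\<in>TP P (Suc n). g as) = (\<Sum>x\<in>TP P n \<times> P. g (fst x @ [snd x]))"
    unfolding TP_Suc_snoc by (subst sum.reindex[OF inj_snoc_pair]) (simp add: case_prod_unfold)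
  also have "\<dots> = (\<Sum>as\<in>TP P n. \<Sum>a\<in>P. g (as @ [a]))"
    by (simp add: sum.cartesian_product case_prod_unfold)
  finally show ?thesis .
qed

section \<open>Product functions\<close>

definition Fp :: "(nat \<Rightarrow> nat \<Rightarrow> complex) \<Rightarrow> nat list \<Rightarrow> nat list \<Rightarrow> complex" where
  "Fp f as xs = prod_list (map (\<lambda>(a,x). f a x) (zip as xs))"

lemma Fp_Nil[simp]: "Fp f [] xs = 1"
  by (simp add: Fp_def)

lemma Fp_Cons[simp]: "Fp f (a # as) (x # xs) = f a x * Fp f as xs"
  by (simp add: Fp_def)

lemma Fp_snoc: "length as = length ys \<Longrightarrow> Fp f (as @ [b]) (ys @ [y]) = Fp f as ys * f b y"
  by (simp add: Fp_def)

lemma Fp_orthonormal: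
  assumes l2f: "\<And>a. a \<in> P \<Longrightarrow> l2 (idx k) (f a)"
    and onf: "\<And>a b. a \<in> P \<Longrightarrow> b \<in> P \<Longrightarrow> ip (idx k) (f a) (f b) = (if a = b then 1 else 0)"
  shows "zs \<in> TP P n \<Longrightarrow> ws \<in> TP P n \<Longrightarrow>
     (\<lambda>ys. cnj (Fp f zs ys) * Fp f ws ys) summable_on tuples n k \<and>
     ip (tuples n k) (Fp f zs) (Fp f ws) = (if zs = ws then 1 else 0)"
proof (induction n arbitrary: zs ws)
  case 0
  then show ?case by (simp add: TP_0 tuples_0 ip_def)
next
  case (Suc n)
  from Suc.prems obtain z zs' w ws' where zs: "zs = z # zs'" "z \<in> P" "zs' \<in> TP P n"
    and ws: "ws = w # ws'" "w \<in> P" "ws' \<in> TP P n"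
    unfolding TP_Suc by auto
  have s1: "(\<lambda>i. cnj (f z i) * f w i) summable_on idx k"
    using l2f zs ws by (intro l2_ip_summable) auto
  from Suc.IH[OF zs(3) ws(3)] have s2: "(\<lambda>ys. cnj (Fp f zs' ys) * Fp f ws' ys) summable_on tuples n k"
    and i2: "ip (tuples n k) (Fp f zs') (Fp f ws') = (if zs' = ws' then 1 else 0)" by auto
  have eq: "(\<lambda>(i,ys). cnj (Fp f zs (i # ys)) * Fp f ws (i # ys)) =
     (\<lambda>(i,ys). (cnj (f z i) * f w i) * (cnj (Fp f zs' ys) * Fp f ws' ys))"
    using zs ws by (auto simp: fun_eq_iff)
  have S: "(\<lambda>(i,ys). (cnj (f z i) * f w i) * (cnj (Fp f zs' ys) * Fp f ws' ys)) summable_on (idx k \<times> tuples n k)"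
    and V: "infsum (\<lambda>(i,ys). (cnj (f z i) * f w i) * (cnj (Fp f zs' ys) * Fp f ws' ys)) (idx k \<times> tuples n k)
       = ip (idx k) (f z) (f w) * ip (tuples n k) (Fp f zs') (Fp f ws')"
    using cplx_prod_summable[OF s1 s2] by (auto simp: ip_def)
  show ?case
  proof
    show "(\<lambda>ys. cnj (Fp f zs ys) * Fp f ws ys) summable_on tuples (Suc n) k"
      unfolding summable_tuples_Suc using S eq by (simp add: case_prod_unfold)
    have "ip (tuples (Suc n) k) (Fp f zs) (Fp f ws) = ip (idx k) (f z) (f w) * ip (tuples n k) (Fp f zs') (Fp f ws')"
      unfolding ip_def infsum_tuples_Suc using V eq by (simp add: case_prod_unfold ip_def)
    then show "ip (tuples (Suc n) k) (Fp f zs) (Fp f ws) = (if zs = ws then 1 else 0)"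
      using i2 onf zs ws by auto
  qed
qed

lemma l2_from_ip_summable:
  "(\<lambda>x. cnj (g x) * g x) summable_on A \<Longrightarrow> l2 A g"
  unfolding l2_def
proof -
  assume "(\<lambda>x. cnj (g x) * g x) summable_on A"
  then have "(\<lambda>x. Re (cnj (g x) * g x)) summable_on A" by (rule summable_on_Re)
  moreover have "Re (cnj (g x) * g x) = (norm (g x))\<^sup>2" for x
    by (metis Re_complex_of_real complex_norm_square mult.commute)
  ultimately show "(\<lambda>x. (norm (g x))\<^sup>2) summable_on A" by simp
qed



lemma sum_delta_ip:
  assumes "finite P" "a \<in> P"
  shows "(\<Sum>b\<in>P. c b * (if a = b then 1 else 0)) = (c a :: complex)"
  using assms by (simp add: if_distrib cong: if_cong)

lemma bessel:
  assumes P: "finite P" and le: "\<And>a. a\<in>P \<Longrightarrow> l2 A (e a)"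
    and on: "\<And>a b. a\<in>P \<Longrightarrow> b\<in>P \<Longrightarrow> ip A (e a) (e b) = (if a = b then 1 else 0)"
    and lw: "l2 A w"
  shows "nrm2 A (\<lambda>x. w x - (\<Sum>a\<in>P. ip A (e a) w * e a x)) = nrm2 A w - (\<Sum>a\<in>P. (norm (ip A (e a) w))\<^sup>2)"
proof -
  define c where "c a = ip A (e a) w" for a
  define y where "y x = (\<Sum>a\<in>P. c a * e a x)" for x
  have lea: "l2 A (\<lambda>x. c a * e a x)" if "a \<in> P" for a using le[OF that] by (rule l2_cmult)
  have yfun: "y = (\<lambda>x. \<Sum>a\<in>P. c a * e a x)" by (simp add: fun_eq_iff y_def)
  have ly: "l2 A y" unfolding yfun using P lea by (intro l2_sum) auto
  have lwy: "l2 A (\<lambda>x. w x - y x)" using lw ly by (rule l2_diff)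
  have wy: "ip A w y = (\<Sum>a\<in>P. c a * cnj (c a))"
  proof -
    have "ip A w y = (\<Sum>a\<in>P. ip A w (\<lambda>x. c a * e a x))"
      unfolding yfun using P lw lea by (rule ip_sum_right)
    also have "\<dots> = (\<Sum>a\<in>P. c a * ip A w (e a))" by (simp add: ip_cmult_right)
    also have "\<dots> = (\<Sum>a\<in>P. c a * cnj (c a))"
      unfolding c_def by (intro sum.cong refl) (simp add: ip_cnj)
    finally show ?thesis .
  qed
  have yv: "ip A y v = (\<Sum>a\<in>P. cnj (c a) * ip A (e a) v)" if "l2 A v" for v
  proof -
    have "ip A y v = (\<Sum>a\<in>P. ip A (\<lambda>x. c a * e a x) v)"
      unfolding yfun using P that lea by (rule ip_sum_left)
    also have "\<dots> = (\<Sum>a\<in>P. cnj (c a) * ip A (e a) v)" by (simp add: ip_cmult_left)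
    finally show ?thesis .
  qed
  have yw: "ip A y w = (\<Sum>a\<in>P. cnj (c a) * c a)"
    using yv[OF lw] by (simp add: c_def)
  have eay: "ip A (e a) y = c a" if "a \<in> P" for a
  proof -
    have "ip A (e a) y = (\<Sum>b\<in>P. ip A (e a) (\<lambda>x. c b * e b x))"
      unfolding yfun using P le[OF that] lea by (rule ip_sum_right)
    also have "\<dots> = (\<Sum>b\<in>P. c b * ip A (e a) (e b))" by (simp add: ip_cmult_right)
    also have "\<dots> = (\<Sum>b\<in>P. c b * (if a = b then 1 else 0))"
      using on that by (intro sum.cong) auto
    also have "\<dots> = c a" using P that by (rule sum_delta_ip)
    finally show ?thesis .
  qed
  have yy: "ip A y y = (\<Sum>a\<in>P. cnj (c a) * c a)"
    using yv[OF ly] eay by simp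
  have sq: "(\<Sum>a\<in>P. cnj (c a) * c a) = complex_of_real (\<Sum>a\<in>P. (norm (c a))\<^sup>2)"
    unfolding of_real_sum by (intro sum.cong refl) (metis complex_norm_square mult.commute)
  have "ip A (\<lambda>x. w x - y x) (\<lambda>x. w x - y x) = ip A w (\<lambda>x. w x - y x) - ip A y (\<lambda>x. w x - y x)"
    using lw ly lwy by (rule ip_diff_left)
  also have "\<dots> = (ip A w w - ip A w y) - (ip A y w - ip A y y)"
    using lw ly by (simp add: ip_diff_right)
  also have "\<dots> = ip A w w - (\<Sum>a\<in>P. cnj (c a) * c a)"
    using wy yw yy by (simp add: mult.commute)
  also have "\<dots> = complex_of_real (nrm2 A w - (\<Sum>a\<in>P. (norm (c a))\<^sup>2))"
    using sq by (simp only: ip_self of_real_diff)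
  finally have "complex_of_real (nrm2 A (\<lambda>x. w x - y x)) = complex_of_real (nrm2 A w - (\<Sum>a\<in>P. (norm (c a))\<^sup>2))"
    by (simp add: ip_self)
  then show ?thesis unfolding y_def c_def by (simp only: of_real_eq_iff)
qed

lemma nrm2_nonneg: "nrm2 A f \<ge> 0"
  unfolding nrm2_def by (rule infsum_nonneg) auto

lemma cauchy_schwarz1:
  assumes "l2 A e" "ip A e e = 1" "l2 A w"
  shows "(norm (ip A e w))\<^sup>2 \<le> nrm2 A w"
proof -
  have "nrm2 A (\<lambda>x. w x - ip A e w * e x) = nrm2 A w - (norm (ip A e w))\<^sup>2"
    using bessel[of "{0::nat}" A "\<lambda>_. e" w] assms by simp
  then show ?thesis using nrm2_nonneg[of A "\<lambda>x. w x - ip A e w * e x"] by simp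
qed

lemma l2_reindex:
  assumes "l2 A g" "inj_on h B" "h ` B \<subseteq> A"
  shows "l2 B (\<lambda>x. g (h x))"
proof -
  have "(\<lambda>x. (norm (g x))\<^sup>2) summable_on h ` B"
    using assms(1,3) unfolding l2_def by (rule summable_on_subset_banach)
  then show ?thesis unfolding l2_def using summable_on_reindex[OF assms(2), of "\<lambda>x. (norm (g x))\<^sup>2"] by (simp add: o_def)
qed

lemma nrm2_zero_imp:
  assumes "l2 A f" "nrm2 A f = 0" "x \<in> A"
  shows "f x = 0"
proof -
  have "(\<lambda>x. (norm (f x))\<^sup>2) x = 0"
    using assms unfolding l2_def nrm2_def
    by (intro nonneg_infsum_le_0D[where A=A]) auto
  then show ?thesis by simp
qed



lemma infsum_swap_prod: "infsum f (A \<times> B) = infsum (\<lambda>(x,y). f (y,x)) (B \<times> A)"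
proof -
  have "bij_betw (\<lambda>(x,y). (y,x)) (B \<times> A) (A \<times> B)"
    by (rule bij_betwI[of _ _ _ "\<lambda>(x,y). (y,x)"]) auto
  from infsum_reindex_bij_betw[OF this, of f] show ?thesis by (simp add: case_prod_unfold)
qed

locale fsl =
  fixes N :: nat and k :: enat and \<Psi> :: "nat list \<Rightarrow> complex"
  assumes N1: "N \<ge> 1" and FS: "fermion_state N k \<Psi>"
begin

definition cc :: "(nat \<Rightarrow> complex) \<Rightarrow> nat list \<Rightarrow> complex" where
  "cc v ys = ip (idx k) v (\<lambda>i. \<Psi> (i # ys))"

lemma Nsuc: "N = Suc (N - 1)" using N1 by simp

lemma psi_zero: "xs \<notin> tuples N k \<Longrightarrow> \<Psi> xs = 0"
  using FS unfolding fermion_state_def by auto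

lemma psi_perm: "length xs = N \<Longrightarrow> p permutes {..<N} \<Longrightarrow> \<Psi> (permute_list p xs) = of_int (sign p) * \<Psi> xs"
  using FS unfolding fermion_state_def by auto

lemma psi_hs: "((\<lambda>xs. (norm (\<Psi> xs))\<^sup>2) has_sum 1) (tuples N k)"
  using FS unfolding fermion_state_def by auto

lemma l2_psi: "l2 (tuples N k) \<Psi>" and nrm2_psi: "nrm2 (tuples N k) \<Psi> = 1"
  using psi_hs unfolding l2_def nrm2_def by (auto simp: summable_on_def infsumI)

lemma W_summable: "(\<lambda>(i,ys). (norm (\<Psi> (i # ys)))\<^sup>2) summable_on (idx k \<times> tuples (N - 1) k)"
  and W_sum: "infsum (\<lambda>(i,ys). (norm (\<Psi> (i # ys)))\<^sup>2) (idx k \<times> tuples (N - 1) k) = 1"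
proof -
  have s: "(\<lambda>xs. (norm (\<Psi> xs))\<^sup>2) summable_on tuples (Suc (N - 1)) k"
    using l2_psi Nsuc unfolding l2_def by simp
  show "(\<lambda>(i,ys). (norm (\<Psi> (i # ys)))\<^sup>2) summable_on (idx k \<times> tuples (N - 1) k)"
    using s unfolding summable_tuples_Suc by (simp add: case_prod_unfold)
  have "infsum (\<lambda>xs. (norm (\<Psi> xs))\<^sup>2) (tuples (Suc (N - 1)) k) = 1"
    using nrm2_psi Nsuc unfolding nrm2_def by simp
  then show "infsum (\<lambda>(i,ys). (norm (\<Psi> (i # ys)))\<^sup>2) (idx k \<times> tuples (N - 1) k) = 1"
    unfolding infsum_tuples_Suc by (simp add: case_prod_unfold)
qed

lemma l2_W: "l2 (idx k \<times> tuples (N - 1) k) (\<lambda>(i,ys). \<Psi> (i # ys))"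
  using W_summable unfolding l2_def by (simp add: case_prod_unfold)

lemma l2_row: "i \<in> idx k \<Longrightarrow> l2 (tuples (N - 1) k) (\<lambda>ys. \<Psi> (i # ys))"
  by (rule l2_reindex[OF l2_psi]) (use N1 in \<open>auto simp: inj_on_def tuples_def\<close>)

lemma l2_col: "ys \<in> tuples (N - 1) k \<Longrightarrow> l2 (idx k) (\<lambda>i. \<Psi> (i # ys))"
  by (rule l2_reindex[OF l2_psi]) (use N1 in \<open>auto simp: inj_on_def tuples_def\<close>)

lemma rowsum_summable: "(\<lambda>ys. nrm2 (idx k) (\<lambda>i. \<Psi> (i # ys))) summable_on tuples (N - 1) k"
  and rowsum: "infsum (\<lambda>ys. nrm2 (idx k) (\<lambda>i. \<Psi> (i # ys))) (tuples (N - 1) k) = 1"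
proof -
  have S: "(\<lambda>(ys,i). (norm (\<Psi> (i # ys)))\<^sup>2) summable_on (tuples (N - 1) k \<times> idx k)"
    using W_summable by (subst summable_on_swap) (simp add: case_prod_unfold)
  from summable_on_Sigma_banach[OF S]
  show "(\<lambda>ys. nrm2 (idx k) (\<lambda>i. \<Psi> (i # ys))) summable_on tuples (N - 1) k"
    unfolding nrm2_def by simp
  have "infsum (\<lambda>ys. nrm2 (idx k) (\<lambda>i. \<Psi> (i # ys))) (tuples (N - 1) k)
      = infsum (\<lambda>(ys,i). (norm (\<Psi> (i # ys)))\<^sup>2) (tuples (N - 1) k \<times> idx k)"
    unfolding nrm2_def using infsum_Sigma'_banach[OF S] by simp
  also have "\<dots> = infsum (\<lambda>(i,ys). (norm (\<Psi> (i # ys)))\<^sup>2) (idx k \<times> tuples (N - 1) k)"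
    by (subst infsum_swap_prod) (simp add: case_prod_unfold)
  finally show "infsum (\<lambda>ys. nrm2 (idx k) (\<lambda>i. \<Psi> (i # ys))) (tuples (N - 1) k) = 1"
    using W_sum by simp
qed

lemma G_step1:
  assumes i: "i \<in> idx k" and lv: "l2 (idx k) v"
  shows "infsum (\<lambda>j. rdm1 N k \<Psi> i j * v j) (idx k)
       = of_nat N * infsum (\<lambda>ys. \<Psi> (i # ys) * cnj (cc v ys)) (tuples (N - 1) k)"
proof -
  let ?T = "tuples (N - 1) k" and ?I = "idx k"
  define g where "g j ys = \<Psi> (i # ys) * cnj (\<Psi> (j # ys)) * v j" for j ys
  have S: "(\<lambda>(j,ys). g j ys) summable_on (?I \<times> ?T)"
  proof -
    have l1: "l2 (?I \<times> ?T) (\<lambda>(j,ys). v j * \<Psi> (i # ys))"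
      using l2_prod[OF lv l2_row[OF i]] by simp
    have l2': "l2 (?I \<times> ?T) (\<lambda>(j,ys). cnj (\<Psi> (j # ys)))"
      using l2_W by (simp add: l2_def case_prod_unfold)
    have "(\<lambda>x. (\<lambda>(j,ys). v j * \<Psi> (i # ys)) x * (\<lambda>(j,ys). cnj (\<Psi> (j # ys))) x) summable_on (?I \<times> ?T)"
      by (rule l2_prod_summable[OF l1 l2'])
    then show ?thesis unfolding g_def by (simp add: case_prod_unfold mult_ac)
  qed
  have "infsum (\<lambda>j. rdm1 N k \<Psi> i j * v j) ?I
      = infsum (\<lambda>j. of_nat N * (infsum (\<lambda>ys. \<Psi> (i # ys) * cnj (\<Psi> (j # ys))) ?T * v j)) ?I"
    unfolding rdm1_def by (simp add: mult.assoc)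
  also have "\<dots> = of_nat N * infsum (\<lambda>j. infsum (\<lambda>ys. \<Psi> (i # ys) * cnj (\<Psi> (j # ys))) ?T * v j) ?I"
    by (rule infsum_cmult_right')
  also have "\<dots> = of_nat N * infsum (\<lambda>j. infsum (\<lambda>ys. g j ys) ?T) ?I"
    unfolding g_def by (simp add: infsum_cmult_left')
  also have "\<dots> = of_nat N * infsum (\<lambda>ys. infsum (\<lambda>j. g j ys) ?I) ?T"
    using infsum_swap_banach[OF S] by simp
  also have "\<dots> = of_nat N * infsum (\<lambda>ys. \<Psi> (i # ys) * cnj (cc v ys)) ?T"
  proof -
    have "infsum (\<lambda>j. g j ys) ?I = \<Psi> (i # ys) * cnj (cc v ys)" for ys
    proof -
      have "infsum (\<lambda>j. g j ys) ?I = \<Psi> (i # ys) * infsum (\<lambda>j. cnj (\<Psi> (j # ys)) * v j) ?I"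
        unfolding g_def by (simp add: mult.assoc infsum_cmult_right')
      also have "infsum (\<lambda>j. cnj (\<Psi> (j # ys)) * v j) ?I = cnj (cc v ys)"
        unfolding cc_def ip_def by (simp flip: infsum_cnj add: mult.commute)
      finally show ?thesis .
    qed
    then show ?thesis by simp
  qed
  finally show ?thesis .
qed

lemma G:
  assumes lu: "l2 (idx k) u" and lv: "l2 (idx k) v" and lc: "l2 (tuples (N - 1) k) (cc v)"
  shows "inner_k k u (apply_op k (rdm1 N k \<Psi>) v) = of_nat N * ip (tuples (N - 1) k) (cc v) (cc u)"
proof -
  let ?T = "tuples (N - 1) k" and ?I = "idx k"
  define h where "h i ys = cnj (u i) * \<Psi> (i # ys) * cnj (cc v ys)" for i ys
  have S: "(\<lambda>(i,ys). h i ys) summable_on (?I \<times> ?T)"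
  proof -
    have l1: "l2 (?I \<times> ?T) (\<lambda>(i,ys). cnj (u i) * cnj (cc v ys))"
      using l2_prod[of ?I "\<lambda>i. cnj (u i)" ?T "\<lambda>ys. cnj (cc v ys)"] lu lc by (simp add: l2_cnj)
    have "(\<lambda>x. (\<lambda>(i,ys). cnj (u i) * cnj (cc v ys)) x * (\<lambda>(i,ys). \<Psi> (i # ys)) x) summable_on (?I \<times> ?T)"
      by (rule l2_prod_summable[OF l1 l2_W])
    then show ?thesis unfolding h_def by (simp add: case_prod_unfold mult_ac)
  qed
  have "inner_k k u (apply_op k (rdm1 N k \<Psi>) v)
      = infsum (\<lambda>i. cnj (u i) * (of_nat N * infsum (\<lambda>ys. \<Psi> (i # ys) * cnj (cc v ys)) ?T)) ?I"
    unfolding inner_k_def apply_op_def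
    by (intro infsum_cong) (simp add: G_step1[OF _ lv])
  also have "\<dots> = of_nat N * infsum (\<lambda>i. infsum (\<lambda>ys. h i ys) ?T) ?I"
    unfolding h_def
    by (simp add: infsum_cmult_right' mult.assoc mult.left_commute[of "cnj (u _)"] flip: infsum_cmult_right')
  also have "\<dots> = of_nat N * infsum (\<lambda>ys. infsum (\<lambda>i. h i ys) ?I) ?T"
    using infsum_swap_banach[OF S] by simp
  also have "\<dots> = of_nat N * ip ?T (cc v) (cc u)"
  proof -
    have "infsum (\<lambda>i. h i ys) ?I = cnj (cc v ys) * cc u ys" for ys
      unfolding h_def cc_def ip_def
      by (simp add: infsum_cmult_left' mult.commute)
    then show ?thesis unfolding ip_def by simp
  qed
  finally show ?thesis .
qed

end


context fsl begin

lemma inner_k_ip: "inner_k k u v = ip (idx k) u v"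
  by (simp add: inner_k_def ip_def)

lemma l2_cc:
  assumes lv: "l2 (idx k) v" and nv: "ip (idx k) v v = 1"
  shows "l2 (tuples (N - 1) k) (cc v)"
  unfolding l2_def
proof (rule summable_on_comparison_test[OF rowsum_summable])
  fix ys assume ys: "ys \<in> tuples (N - 1) k"
  show "(norm (cc v ys))\<^sup>2 \<le> nrm2 (idx k) (\<lambda>i. \<Psi> (i # ys))"
    unfolding cc_def by (rule cauchy_schwarz1[OF lv nv l2_col[OF ys]])
qed auto

lemma herm_orth:
  assumes lu: "l2 (idx k) u" and nu: "ip (idx k) u u = 1"
    and lv: "l2 (idx k) v" and nv: "ip (idx k) v v = 1"
    and eu: "apply_op k (rdm1 N k \<Psi>) u = (\<lambda>i. complex_of_real \<alpha> * u i)"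
    and ev: "apply_op k (rdm1 N k \<Psi>) v = (\<lambda>i. complex_of_real \<beta> * v i)"
    and ne: "\<alpha> \<noteq> \<beta>"
  shows "ip (idx k) u v = 0"
proof -
  have g1: "complex_of_real \<beta> * ip (idx k) u v = of_nat N * ip (tuples (N - 1) k) (cc v) (cc u)"
    using G[OF lu lv l2_cc[OF lv nv]] ev by (simp add: inner_k_ip ip_cmult_right)
  have g2: "complex_of_real \<alpha> * ip (idx k) v u = of_nat N * ip (tuples (N - 1) k) (cc u) (cc v)"
    using G[OF lv lu l2_cc[OF lu nu]] eu by (simp add: inner_k_ip ip_cmult_right)
  have "cnj (complex_of_real \<alpha> * ip (idx k) v u) = cnj (of_nat N * ip (tuples (N - 1) k) (cc u) (cc v))"
    using g2 by simp
  then have "complex_of_real \<alpha> * ip (idx k) u v = of_nat N * ip (tuples (N - 1) k) (cc v) (cc u)"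
    by (simp add: ip_cnj)
  with g1 have "(complex_of_real \<alpha> - complex_of_real \<beta>) * ip (idx k) u v = 0"
    by (simp add: left_diff_distrib)
  then show ?thesis using ne by simp
qed

end

locale eig = fsl +
  fixes P :: "nat set" and f :: "nat \<Rightarrow> nat \<Rightarrow> complex" and lamv :: "nat \<Rightarrow> real"
  assumes finP: "finite P"
    and l2f: "\<And>a. a \<in> P \<Longrightarrow> l2 (idx k) (f a)"
    and onf: "\<And>a b. a \<in> P \<Longrightarrow> b \<in> P \<Longrightarrow> ip (idx k) (f a) (f b) = (if a = b then 1 else 0)"
    and eigf: "\<And>a. a \<in> P \<Longrightarrow> apply_op k (rdm1 N k \<Psi>) (f a) = (\<lambda>i. complex_of_real (lamv a) * f a i)"
    and sumP: "(\<Sum>a\<in>P. lamv a) = real N"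
begin

lemma l2_ccf: "a \<in> P \<Longrightarrow> l2 (tuples (N - 1) k) (cc (f a))"
  using l2_cc[OF l2f] onf by auto

lemma nrm_cc: "a \<in> P \<Longrightarrow> nrm2 (tuples (N - 1) k) (cc (f a)) = lamv a / real N"
proof -
  assume a: "a \<in> P"
  have "complex_of_real (lamv a) * ip (idx k) (f a) (f a) = of_nat N * ip (tuples (N - 1) k) (cc (f a)) (cc (f a))"
    using G[OF l2f[OF a] l2f[OF a] l2_ccf[OF a]] eigf[OF a] by (simp add: inner_k_ip ip_cmult_right)
  then have "complex_of_real (lamv a) = complex_of_real (real N * nrm2 (tuples (N - 1) k) (cc (f a)))"
    using onf[OF a a] by (simp add: ip_self)
  then have "lamv a = real N * nrm2 (tuples (N - 1) k) (cc (f a))" by (simp only: of_real_eq_iff)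
  then show ?thesis using N1 by (simp add: field_simps)
qed

lemma E1:
  assumes ys: "ys \<in> tuples (N - 1) k" and i: "i \<in> idx k"
  shows "\<Psi> (i # ys) = (\<Sum>a\<in>P. cc (f a) ys * f a i)"
proof -
  let ?T = "tuples (N - 1) k" and ?I = "idx k"
  define D where "D zs = nrm2 ?I (\<lambda>j. \<Psi> (j # zs) - (\<Sum>a\<in>P. cc (f a) zs * f a j))" for zs
  have Dq: "D zs = nrm2 ?I (\<lambda>j. \<Psi> (j # zs)) - (\<Sum>a\<in>P. (norm (cc (f a) zs))\<^sup>2)"
    if "zs \<in> ?T" for zs
  proof -
    have "nrm2 ?I (\<lambda>j. \<Psi> (j # zs) - (\<Sum>a\<in>P. ip ?I (f a) (\<lambda>i. \<Psi> (i # zs)) * f a j))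
       = nrm2 ?I (\<lambda>j. \<Psi> (j # zs)) - (\<Sum>a\<in>P. (norm (ip ?I (f a) (\<lambda>i. \<Psi> (i # zs))))\<^sup>2)"
      by (rule bessel[OF finP l2f onf l2_col[OF that]])
    then show ?thesis unfolding D_def cc_def .
  qed
  have sA: "(\<lambda>zs. (\<Sum>a\<in>P. (norm (cc (f a) zs))\<^sup>2)) summable_on ?T"
    using finP l2_ccf unfolding l2_def by (intro summable_on_sum_fin) auto
  have iA: "infsum (\<lambda>zs. (\<Sum>a\<in>P. (norm (cc (f a) zs))\<^sup>2)) ?T = 1"
  proof -
    have "infsum (\<lambda>zs. (\<Sum>a\<in>P. (norm (cc (f a) zs))\<^sup>2)) ?T = (\<Sum>a\<in>P. nrm2 ?T (cc (f a)))"
      unfolding nrm2_def using finP l2_ccf unfolding l2_def by (intro infsum_sum_fin) auto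
    also have "\<dots> = (\<Sum>a\<in>P. lamv a / real N)" using nrm_cc by simp
    also have "\<dots> = 1" using sumP N1 by (simp flip: sum_divide_distrib)
    finally show ?thesis .
  qed
  have sD0: "(\<lambda>zs. nrm2 ?I (\<lambda>j. \<Psi> (j # zs)) - (\<Sum>a\<in>P. (norm (cc (f a) zs))\<^sup>2)) summable_on ?T"
    by (rule summable_on_diff[OF rowsum_summable sA])
  have "D summable_on ?T \<longleftrightarrow> (\<lambda>zs. nrm2 ?I (\<lambda>j. \<Psi> (j # zs)) - (\<Sum>a\<in>P. (norm (cc (f a) zs))\<^sup>2)) summable_on ?T"
    by (rule summable_on_cong) (rule Dq)
  with sD0 have sD: "D summable_on ?T" by simp
  have iD: "infsum D ?T = 0"
  proof -
    have "infsum D ?T = infsum (\<lambda>zs. nrm2 ?I (\<lambda>j. \<Psi> (j # zs)) - (\<Sum>a\<in>P. (norm (cc (f a) zs))\<^sup>2)) ?T"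
      using Dq by (intro infsum_cong) auto
    also have "\<dots> = 0" using infsum_diff[OF rowsum_summable sA] rowsum iA by simp
    finally show ?thesis .
  qed
  have "D ys = 0"
  proof (rule nonneg_infsum_le_0D[of D ?T])
    show "infsum D ?T \<le> 0" using iD by simp
    show "D summable_on ?T" by (rule sD)
    show "\<And>x. x \<in> ?T \<Longrightarrow> 0 \<le> D x" unfolding D_def by (rule nrm2_nonneg)
    show "ys \<in> ?T" by (rule ys)
  qed
  moreover have "l2 ?I (\<lambda>j. \<Psi> (j # ys) - (\<Sum>a\<in>P. cc (f a) ys * f a j))"
    using l2_col[OF ys] finP l2f by (intro l2_diff l2_sum l2_cmult) auto
  ultimately have "(\<lambda>j. \<Psi> (j # ys) - (\<Sum>a\<in>P. cc (f a) ys * f a j)) i = 0"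
    unfolding D_def using i by (intro nrm2_zero_imp) auto
  then show ?thesis by simp
qed

end


context eig begin

lemma slot:
  assumes L: "L \<in> tuples N k" and t: "t < N" and x: "x \<in> idx k"
  shows "\<Psi> (L[t := x]) = (\<Sum>b\<in>P. f b x * ip (idx k) (f b) (\<lambda>y. \<Psi> (L[t := y])))"
proof -
  define p where "p = Transposition.transpose (0::nat) t"
  have lenL: "length L = N" using L by (simp add: tuples_def)
  have pp: "p permutes {..<N}" unfolding p_def using t by (intro permutes_swap_id) auto
  define R where "R = tl (permute_list p L)"
  have perm: "permute_list p (L[t := y]) = y # R" for y
  proof (rule nth_equalityI)
    show "length (permute_list p (L[t := y])) = length (y # R)"
      unfolding R_def using lenL N1 by simp
    fix i assume "i < length (permute_list p (L[t := y]))"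
    then have i: "i < N" using lenL by simp
    have ppl: "p permutes {..<length (L[t := y])}" "p permutes {..<length L}" using pp lenL by simp_all
    show "permute_list p (L[t := y]) ! i = (y # R) ! i"
    proof (cases "i = 0")
      case True
      then show ?thesis using permute_list_nth[OF ppl(1)] i lenL t by (simp add: p_def)
    next
      case False
      then have pi: "p i \<noteq> t" unfolding p_def by (auto simp: Transposition.transpose_def split: if_splits)
      have "(y # R) ! i = R ! (i - 1)" using False by simp
      also have "\<dots> = permute_list p L ! i" unfolding R_def using False i lenL
        by (simp add: nth_tl)
      also have "\<dots> = L ! p i" using permute_list_nth[OF ppl(2)] i lenL by simp
      finally show ?thesis using permute_list_nth[OF ppl(1)] i lenL pi by simp
    qed
  qed
  define s where "s = complex_of_int (sign p)"
  have ss: "s * s = 1" unfolding s_def by (metis of_int_mult of_int_1 sign_idempotent)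
  have eq: "\<Psi> (L[t := y]) = s * \<Psi> (y # R)" for y
  proof -
    have "\<Psi> (y # R) = s * \<Psi> (L[t := y])"
      using psi_perm[of "L[t := y]" p] pp lenL perm by (simp add: s_def)
    then show ?thesis using ss by (simp add: mult.assoc[symmetric])
  qed
  have R: "R \<in> tuples (N - 1) k"
  proof -
    have "set (permute_list p L) = set L" using pp lenL by simp
    moreover have "set (tl (permute_list p L)) \<subseteq> set (permute_list p L)"
      by (metis list.sel(2) list.set_sel(2) subsetI)
    ultimately show ?thesis using L lenL unfolding R_def tuples_def by auto
  qed
  have "\<Psi> (L[t := x]) = s * \<Psi> (x # R)" by (rule eq)
  also have "\<dots> = s * (\<Sum>b\<in>P. cc (f b) R * f b x)" using E1[OF R x] by simp
  also have "\<dots> = (\<Sum>b\<in>P. f b x * (s * cc (f b) R))"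
    by (simp add: sum_distrib_left mult_ac)
  also have "\<dots> = (\<Sum>b\<in>P. f b x * ip (idx k) (f b) (\<lambda>y. \<Psi> (L[t := y])))"
    unfolding eq cc_def by (simp add: ip_cmult_right)
  finally show ?thesis .
qed

definition K :: "nat \<Rightarrow> nat list \<Rightarrow> nat list \<Rightarrow> complex" where
  "K j as zs = ip (tuples j k) (Fp f as) (\<lambda>ys. \<Psi> (ys @ zs))"

lemma l2_Fp: "as \<in> TP P j \<Longrightarrow> l2 (tuples j k) (Fp f as)"
  using Fp_orthonormal[OF l2f onf, where zs=as and ws=as and n=j] by (auto intro: l2_from_ip_summable)

lemma K_step:
  assumes as: "as \<in> TP P j" and x: "x \<in> idx k" and zs: "set zs \<subseteq> idx k"
    and len: "j + 1 + length zs = N"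
  shows "K j as (x # zs) = (\<Sum>b\<in>P. f b x * K (Suc j) (as @ [b]) zs)"
proof -
  let ?T = "tuples j k" and ?I = "idx k"
  define S where "S b ys = ip ?I (f b) (\<lambda>y. \<Psi> (ys @ y # zs))" for b ys
  have lenas: "length as = j" using as by (simp add: TP_def)
  have pt: "\<Psi> (ys @ x # zs) = (\<Sum>b\<in>P. f b x * S b ys)" if ys: "ys \<in> ?T" for ys
  proof -
    have L: "ys @ x # zs \<in> tuples N k" using ys x zs len by (auto simp: tuples_def)
    have ly: "length ys = j" using ys by (simp add: tuples_def)
    have "(ys @ x # zs)[j := y] = ys @ y # zs" for y using ly by (simp add: list_update_append)
    then show ?thesis using slot[OF L _ x, of j] len ly unfolding S_def by simp
  qed
  have lPsi: "l2 (?T \<times> ?I) (\<lambda>(ys,y). \<Psi> (ys @ y # zs))"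
  proof -
    have "l2 (?T \<times> ?I) (\<lambda>w. \<Psi> ((\<lambda>(ys,y). ys @ y # zs) w))"
    proof (rule l2_reindex[OF l2_psi])
      show "inj_on (\<lambda>(ys, y). ys @ y # zs) (?T \<times> ?I)"
        by (auto simp: inj_on_def tuples_def)
      show "(\<lambda>(ys, y). ys @ y # zs) ` (?T \<times> ?I) \<subseteq> tuples N k"
        using zs len by (auto simp: tuples_def)
    qed
    then show ?thesis by (simp add: case_prod_unfold)
  qed
  have Gs: "(\<lambda>(ys,y). cnj (Fp f as ys) * (cnj (f b y) * \<Psi> (ys @ y # zs))) summable_on (?T \<times> ?I)"
    if b: "b \<in> P" for b
  proof -
    have l1: "l2 (?T \<times> ?I) (\<lambda>(ys,y). cnj (Fp f as ys) * cnj (f b y))"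
      using l2_prod[of ?T "\<lambda>ys. cnj (Fp f as ys)" ?I "\<lambda>y. cnj (f b y)"] l2_Fp[OF as] l2f[OF b]
      by (simp add: l2_cnj)
    have "(\<lambda>w. (\<lambda>(ys,y). cnj (Fp f as ys) * cnj (f b y)) w * (\<lambda>(ys,y). \<Psi> (ys @ y # zs)) w) summable_on (?T \<times> ?I)"
      by (rule l2_prod_summable[OF l1 lPsi])
    then show ?thesis by (simp add: case_prod_unfold mult_ac)
  qed
  have inner: "(\<lambda>ys. cnj (Fp f as ys) * S b ys) summable_on ?T \<and>
      infsum (\<lambda>ys. cnj (Fp f as ys) * S b ys) ?T = K (Suc j) (as @ [b]) zs" if b: "b \<in> P" for b
  proof -
    have eqS: "cnj (Fp f as ys) * S b ys = infsum (\<lambda>y. cnj (Fp f as ys) * (cnj (f b y) * \<Psi> (ys @ y # zs))) ?I" for ys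
      unfolding S_def ip_def by (simp add: infsum_cmult_right')
    have "(\<lambda>ys. infsum (\<lambda>y. cnj (Fp f as ys) * (cnj (f b y) * \<Psi> (ys @ y # zs))) ?I) summable_on ?T"
      using summable_on_Sigma_banach[OF Gs[OF b]] by simp
    then have s1: "(\<lambda>ys. cnj (Fp f as ys) * S b ys) summable_on ?T" using eqS by simp
    have "infsum (\<lambda>ys. cnj (Fp f as ys) * S b ys) ?T
        = infsum (\<lambda>(ys,y). cnj (Fp f as ys) * (cnj (f b y) * \<Psi> (ys @ y # zs))) (?T \<times> ?I)"
      using infsum_Sigma'_banach[OF Gs[OF b]] eqS by simp
    also have "\<dots> = infsum (\<lambda>(ys,y). cnj (Fp f (as @ [b]) (ys @ [y])) * \<Psi> ((ys @ [y]) @ zs)) (?T \<times> ?I)"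
      by (intro infsum_cong) (auto simp: Fp_snoc lenas tuples_def mult_ac)
    also have "\<dots> = K (Suc j) (as @ [b]) zs"
      unfolding K_def ip_def infsum_tuples_snoc by (simp add: case_prod_unfold)
    finally show ?thesis using s1 by simp
  qed
  have "K j as (x # zs) = infsum (\<lambda>ys. cnj (Fp f as ys) * (\<Sum>b\<in>P. f b x * S b ys)) ?T"
    unfolding K_def ip_def by (intro infsum_cong) (simp add: pt)
  also have "\<dots> = infsum (\<lambda>ys. \<Sum>b\<in>P. f b x * (cnj (Fp f as ys) * S b ys)) ?T"
    by (simp add: sum_distrib_left mult_ac)
  also have "\<dots> = (\<Sum>b\<in>P. infsum (\<lambda>ys. f b x * (cnj (Fp f as ys) * S b ys)) ?T)"
    using finP inner by (intro infsum_sum_fin) (auto intro: summable_on_cmult_right)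
  also have "\<dots> = (\<Sum>b\<in>P. f b x * K (Suc j) (as @ [b]) zs)"
    using inner by (intro sum.cong refl) (simp add: infsum_cmult_right')
  finally show ?thesis .
qed

lemma claim:
  assumes xs: "xs \<in> tuples N k"
  shows "j \<le> N \<Longrightarrow> \<Psi> xs = (\<Sum>as\<in>TP P j. Fp f as (take j xs) * K j as (drop j xs))"
proof (induction j)
  case 0
  have "K 0 [] xs = \<Psi> xs" by (simp add: K_def ip_def tuples_0)
  then show ?case by (simp add: TP_0)
next
  case (Suc j)
  then have IH: "\<Psi> xs = (\<Sum>as\<in>TP P j. Fp f as (take j xs) * K j as (drop j xs))" by simp
  have lxs: "length xs = N" "set xs \<subseteq> idx k" using xs by (auto simp: tuples_def)
  have jN: "j < N" using Suc by simp
  define x where "x = xs ! j"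
  define zs where "zs = drop (Suc j) xs"
  have dj: "drop j xs = x # zs" unfolding x_def zs_def using jN lxs by (simp add: Cons_nth_drop_Suc)
  have tk: "take (Suc j) xs = take j xs @ [x]" unfolding x_def using jN lxs by (simp add: take_Suc_conv_app_nth)
  have x: "x \<in> idx k" unfolding x_def using jN lxs by auto
  have zs: "set zs \<subseteq> idx k" unfolding zs_def using lxs by (meson order_trans set_drop_subset)
  have len: "j + 1 + length zs = N" unfolding zs_def using jN lxs by simp
  have ltk: "length (take j xs) = j" using jN lxs by simp
  have "\<Psi> xs = (\<Sum>as\<in>TP P j. Fp f as (take j xs) * (\<Sum>b\<in>P. f b x * K (Suc j) (as @ [b]) zs))"
    unfolding IH dj by (intro sum.cong refl) (simp add: K_step[OF _ x zs len])
  also have "\<dots> = (\<Sum>as\<in>TP P j. \<Sum>b\<in>P. Fp f (as @ [b]) (take (Suc j) xs) * K (Suc j) (as @ [b]) zs)"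
    unfolding tk
  proof (intro sum.cong refl)
    fix as assume "as \<in> TP P j"
    then have "length as = length (take j xs)" using ltk by (simp add: TP_def)
    then show "Fp f as (take j xs) * (\<Sum>b\<in>P. f b x * K (Suc j) (as @ [b]) zs) =
       (\<Sum>b\<in>P. Fp f (as @ [b]) (take j xs @ [x]) * K (Suc j) (as @ [b]) zs)"
      by (simp add: sum_distrib_left Fp_snoc mult_ac)
  qed
  also have "\<dots> = (\<Sum>as\<in>TP P (Suc j). Fp f as (take (Suc j) xs) * K (Suc j) as (drop (Suc j) xs))"
    unfolding zs_def by (simp add: sum_TP_snoc[OF finP])
  finally show ?case .
qed

definition coef :: "nat list \<Rightarrow> complex" where
  "coef as = ip (tuples N k) (Fp f as) \<Psi>"

lemma expansion:
  assumes xs: "xs \<in> tuples N k"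
  shows "\<Psi> xs = (\<Sum>as\<in>TP P N. coef as * Fp f as xs)"
proof -
  have l: "length xs = N" using xs by (simp add: tuples_def)
  show ?thesis using claim[OF xs, of N] l by (simp add: K_def coef_def mult.commute)
qed

end


lemma ip_cong: "(\<And>x. x \<in> A \<Longrightarrow> u x = u' x) \<Longrightarrow> (\<And>x. x \<in> A \<Longrightarrow> v x = v' x) \<Longrightarrow> ip A u v = ip A u' v'"
  unfolding ip_def by (intro infsum_cong) auto

lemma Fp_perm:
  assumes p: "p permutes {..<n}" and la: "length as = n" and ly: "length ys = n"
  shows "Fp f (permute_list p as) (permute_list p ys) = Fp f as ys"
proof -
  have "permute_list p (zip as ys) = zip (permute_list p as) (permute_list p ys)"
    by (rule permute_list_zip[OF p]) (use la ly in auto)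
  then have "zip (permute_list p as) (permute_list p ys) = permute_list p (zip as ys)" by simp
  moreover have "permute_list p (map (\<lambda>(a,x). f a x) (zip as ys)) = map (\<lambda>(a,x). f a x) (permute_list p (zip as ys))"
    by (rule permute_list_map) (use p la ly in simp)
  moreover have "prod_list (permute_list p (map (\<lambda>(a,x). f a x) (zip as ys))) = prod_list (map (\<lambda>(a,x). f a x) (zip as ys))"
    using p la ly by (simp flip: prod_mset_prod_list)
  ultimately show ?thesis unfolding Fp_def by metis
qed

lemma permute_list_inv:
  assumes p: "p permutes {..<length xs}"
  shows "permute_list (inv p) (permute_list p xs) = xs" "permute_list p (permute_list (inv p) xs) = xs"
proof -
  have ip: "inv p permutes {..<length xs}" using p by (rule permutes_inv)
  show "permute_list (inv p) (permute_list p xs) = xs"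
    using permute_list_compose[OF ip, of p] permutes_inv_o(1)[OF p] by simp
  show "permute_list p (permute_list (inv p) xs) = xs"
    using permute_list_compose[OF p, of "inv p"] permutes_inv_o(2)[OF p] by simp
qed

context eig begin

lemma coef_perm:
  assumes p: "p permutes {..<N}" and la: "length as = N"
  shows "coef (permute_list p as) = of_int (sign p) * coef as"
proof -
  let ?T = "tuples N k"
  have ip: "inv p permutes {..<N}" using p by (rule permutes_inv)
  have "coef (permute_list p as) = infsum (\<lambda>xs. cnj (Fp f (permute_list p as) xs) * \<Psi> xs) ?T"
    unfolding coef_def ip_def ..
  also have "\<dots> = infsum (\<lambda>ys. cnj (Fp f (permute_list p as) (permute_list p ys)) * \<Psi> (permute_list p ys)) ?T"
  proof (rule infsum_reindex_bij_witness[where i="permute_list p" and j="permute_list (inv p)"])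
    fix xs assume "xs \<in> ?T"
    then have l: "length xs = N" by (simp add: tuples_def)
    show "permute_list p (permute_list (inv p) xs) = xs" using permute_list_inv(2)[of p xs] p l by simp
    show "permute_list (inv p) xs \<in> ?T" using \<open>xs \<in> ?T\<close> ip l by (simp add: tuples_def)
    show "cnj (Fp f (permute_list p as) (permute_list p (permute_list (inv p) xs))) * \<Psi> (permute_list p (permute_list (inv p) xs))
        = cnj (Fp f (permute_list p as) xs) * \<Psi> xs" using permute_list_inv(2)[of p xs] p l by simp
  next
    fix ys assume "ys \<in> ?T"
    then have l: "length ys = N" by (simp add: tuples_def)
    show "permute_list (inv p) (permute_list p ys) = ys" using permute_list_inv(1)[of p ys] p l by simp
    show "permute_list p ys \<in> ?T" using \<open>ys \<in> ?T\<close> p l by (simp add: tuples_def)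
  qed
  also have "\<dots> = infsum (\<lambda>ys. cnj (Fp f as ys) * (of_int (sign p) * \<Psi> ys)) ?T"
    by (intro infsum_cong) (auto simp: Fp_perm[OF p la] tuples_def psi_perm[OF _ p])
  also have "\<dots> = of_int (sign p) * coef as"
    unfolding coef_def ip_def by (simp add: mult.left_commute infsum_cmult_right')
  finally show ?thesis .
qed

lemma cc_expand:
  assumes a: "a \<in> P" and ys: "ys \<in> tuples (N - 1) k"
  shows "cc (f a) ys = (\<Sum>zs\<in>TP P (N - 1). coef (a # zs) * Fp f zs ys)"
proof -
  let ?I = "idx k"
  define C where "C c = (\<Sum>zs\<in>TP P (N - 1). coef (c # zs) * Fp f zs ys)" for c
  define g where "g c i = C c * f c i" for c i
  have pt: "\<Psi> (i # ys) = (\<Sum>c\<in>P. g c i)" if i: "i \<in> ?I" for i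
  proof -
    have "i # ys \<in> tuples N k" using i ys N1 by (auto simp: tuples_def)
    then have "\<Psi> (i # ys) = (\<Sum>cs\<in>TP P (Suc (N - 1)). coef cs * Fp f cs (i # ys))"
      using expansion Nsuc by simp
    also have "\<dots> = (\<Sum>c\<in>P. \<Sum>zs\<in>TP P (N - 1). coef (c # zs) * (f c i * Fp f zs ys))"
      by (simp add: sum_TP_Suc[OF finP])
    also have "\<dots> = (\<Sum>c\<in>P. g c i)"
      unfolding g_def C_def by (simp add: sum_distrib_right sum_distrib_left mult_ac)
    finally show ?thesis .
  qed
  have "cc (f a) ys = ip ?I (f a) (\<lambda>i. \<Sum>c\<in>P. g c i)"
    unfolding cc_def by (rule ip_cong) (auto simp: pt)
  also have "\<dots> = (\<Sum>c\<in>P. ip ?I (f a) (g c))"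
    using finP l2f[OF a] l2f unfolding g_def by (intro ip_sum_right) (auto intro: l2_cmult)
  also have "\<dots> = (\<Sum>c\<in>P. C c * (if a = c then 1 else 0))"
  proof (intro sum.cong refl)
    fix c assume c: "c \<in> P"
    have "ip ?I (f a) (g c) = C c * ip ?I (f a) (f c)" unfolding g_def by (rule ip_cmult_right)
    then show "ip ?I (f a) (g c) = C c * (if a = c then 1 else 0)" using onf[OF a c] by simp
  qed
  also have "\<dots> = (\<Sum>zs\<in>TP P (N - 1). coef (a # zs) * Fp f zs ys)"
    using sum_delta_ip[OF finP a, of C] by (simp add: C_def)
  finally show ?thesis .
qed

lemma coef_rdm:
  assumes a: "a \<in> P" and b: "b \<in> P"
  shows "of_nat N * (\<Sum>zs\<in>TP P (N - 1). coef (a # zs) * cnj (coef (b # zs))) = (if a = b then complex_of_real (lamv a) else 0)"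
proof -
  let ?T = "tuples (N - 1) k" and ?Q = "TP P (N - 1)"
  have finQ: "finite ?Q" using finP by (rule finite_TP)
  have lF: "zs \<in> ?Q \<Longrightarrow> l2 ?T (Fp f zs)" for zs by (rule l2_Fp)
  have oF: "zs \<in> ?Q \<Longrightarrow> ws \<in> ?Q \<Longrightarrow> ip ?T (Fp f ws) (Fp f zs) = (if ws = zs then 1 else 0)" for zs ws
    using Fp_orthonormal[OF l2f onf, where zs=ws and ws=zs and n="N - 1"] by simp
  have lsum: "l2 ?T (\<lambda>ys. \<Sum>zs\<in>?Q. coef (c # zs) * Fp f zs ys)" for c
    using finQ lF by (intro l2_sum l2_cmult) auto
  have inner: "ip ?T (Fp f ws) (\<lambda>ys. \<Sum>zs\<in>?Q. coef (a # zs) * Fp f zs ys) = coef (a # ws)" if ws: "ws \<in> ?Q" for ws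
  proof -
    have "ip ?T (Fp f ws) (\<lambda>ys. \<Sum>zs\<in>?Q. coef (a # zs) * Fp f zs ys) = (\<Sum>zs\<in>?Q. ip ?T (Fp f ws) (\<lambda>ys. coef (a # zs) * Fp f zs ys))"
      using finQ lF[OF ws] lF by (intro ip_sum_right) (auto intro: l2_cmult)
    also have "\<dots> = (\<Sum>zs\<in>?Q. coef (a # zs) * (if ws = zs then 1 else 0))"
      using oF ws by (intro sum.cong refl) (simp add: ip_cmult_right)
    also have "\<dots> = coef (a # ws)" using sum_delta_ip[OF finQ ws, of "\<lambda>zs. coef (a # zs)"] by simp
    finally show ?thesis .
  qed
  have "ip ?T (cc (f b)) (cc (f a)) = ip ?T (\<lambda>ys. \<Sum>ws\<in>?Q. coef (b # ws) * Fp f ws ys) (\<lambda>ys. \<Sum>zs\<in>?Q. coef (a # zs) * Fp f zs ys)"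
    by (rule ip_cong) (auto simp: cc_expand a b)
  also have "\<dots> = (\<Sum>ws\<in>?Q. ip ?T (\<lambda>ys. coef (b # ws) * Fp f ws ys) (\<lambda>ys. \<Sum>zs\<in>?Q. coef (a # zs) * Fp f zs ys))"
    using finQ lsum lF by (intro ip_sum_left) (auto intro: l2_cmult)
  also have "\<dots> = (\<Sum>ws\<in>?Q. cnj (coef (b # ws)) * coef (a # ws))"
  proof (intro sum.cong refl)
    fix ws assume ws: "ws \<in> ?Q"
    show "ip ?T (\<lambda>ys. coef (b # ws) * Fp f ws ys) (\<lambda>ys. \<Sum>zs\<in>?Q. coef (a # zs) * Fp f zs ys) = cnj (coef (b # ws)) * coef (a # ws)"
      using inner[OF ws] by (simp add: ip_cmult_left)
  qed
  finally have e1: "ip ?T (cc (f b)) (cc (f a)) = (\<Sum>ws\<in>?Q. coef (a # ws) * cnj (coef (b # ws)))"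
    by (simp add: mult.commute)
  have "inner_k k (f a) (apply_op k (rdm1 N k \<Psi>) (f b)) = of_nat N * ip ?T (cc (f b)) (cc (f a))"
    by (rule G[OF l2f[OF a] l2f[OF b] l2_ccf[OF b]])
  moreover have "inner_k k (f a) (apply_op k (rdm1 N k \<Psi>) (f b)) = complex_of_real (lamv b) * (if a = b then 1 else 0)"
    using eigf[OF b] onf[OF a b] by (simp add: inner_k_ip ip_cmult_right)
  ultimately show ?thesis using e1 by auto
qed

lemma coef_norm: "(\<Sum>as\<in>TP P N. (norm (coef as))\<^sup>2) = 1"
proof -
  have each: "(\<Sum>zs\<in>TP P (N - 1). (norm (coef (a # zs)))\<^sup>2) = lamv a / real N" if a: "a \<in> P" for a
  proof -
    have sq: "(\<Sum>zs\<in>TP P (N - 1). coef (a # zs) * cnj (coef (a # zs))) = complex_of_real (\<Sum>zs\<in>TP P (N - 1). (norm (coef (a # zs)))\<^sup>2)"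
      unfolding of_real_sum by (intro sum.cong refl) (metis complex_norm_square)
    have "complex_of_real (real N * (\<Sum>zs\<in>TP P (N - 1). (norm (coef (a # zs)))\<^sup>2)) = complex_of_real (lamv a)"
      using coef_rdm[OF a a] unfolding sq by simp
    then have "real N * (\<Sum>zs\<in>TP P (N - 1). (norm (coef (a # zs)))\<^sup>2) = lamv a" by (simp only: of_real_eq_iff)
    then show ?thesis using N1 by (simp add: field_simps)
  qed
  have "(\<Sum>as\<in>TP P N. (norm (coef as))\<^sup>2) = (\<Sum>as\<in>TP P (Suc (N - 1)). (norm (coef as))\<^sup>2)"
    using Nsuc by simp
  also have "\<dots> = (\<Sum>a\<in>P. \<Sum>zs\<in>TP P (N - 1). (norm (coef (a # zs)))\<^sup>2)"
    by (rule sum_TP_Suc[OF finP])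
  also have "\<dots> = (\<Sum>a\<in>P. lamv a / real N)" using each by simp
  also have "\<dots> = 1" using sumP N1 by (simp flip: sum_divide_distrib)
  finally show ?thesis .
qed

definition psi2 :: "nat list \<Rightarrow> complex" where
  "psi2 as = (if as \<in> TP P N then coef as else 0)"

lemma psi2_fermion:
  assumes Pk: "P \<subseteq> idx k'"
  shows "fermion_state N k' psi2"
  unfolding fermion_state_def
proof (intro conjI allI impI)
  have sub: "TP P N \<subseteq> tuples N k'" using Pk by (auto simp: TP_def tuples_def)
  show "psi2 xs = 0" if "xs \<notin> tuples N k'" for xs
    using that sub unfolding psi2_def by auto
  show "psi2 (permute_list p xs) = of_int (sign p) * psi2 xs"
    if l: "length xs = N" and p: "p permutes {..<N}" for xs p
  proof -
    have "set (permute_list p xs) = set xs" using p l by simp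
    then have "permute_list p xs \<in> TP P N \<longleftrightarrow> xs \<in> TP P N" using l by (simp add: TP_def)
    then show ?thesis unfolding psi2_def using coef_perm[OF p l] by simp
  qed
  have "((\<lambda>xs. (norm (coef xs))\<^sup>2) has_sum 1) (TP P N)"
    using coef_norm finite_TP[OF finP] by (intro has_sum_finiteI) auto
  then show "((\<lambda>xs. (norm (psi2 xs))\<^sup>2) has_sum 1) (tuples N k')"
    by (subst has_sum_cong_neutral[where T="TP P N" and g="\<lambda>xs. (norm (coef xs))\<^sup>2"])
       (use sub in \<open>auto simp: psi2_def\<close>)
qed

lemma psi2_rdm:
  assumes Pk: "P \<subseteq> idx k'"
  shows "rdm1 N k' psi2 a b = (if a = b \<and> a \<in> P then complex_of_real (lamv a) else 0)"
proof (cases "a \<in> P \<and> b \<in> P")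
  case False
  have z: "(\<lambda>ys. psi2 (a # ys) * cnj (psi2 (b # ys))) = (\<lambda>_. 0)"
    by (rule ext) (use False in \<open>auto simp: psi2_def TP_def\<close>)
  show ?thesis using False by (auto simp: rdm1_def z)
next
  case True
  have sub: "TP P (N - 1) \<subseteq> tuples (N - 1) k'" using Pk by (auto simp: TP_def tuples_def)
  have mem: "c # ys \<in> TP P N \<longleftrightarrow> ys \<in> TP P (N - 1)" if "c \<in> P" for c ys
    using that Nsuc by (auto simp: TP_def)
  have "infsum (\<lambda>ys. psi2 (a # ys) * cnj (psi2 (b # ys))) (tuples (N - 1) k')
      = infsum (\<lambda>ys. coef (a # ys) * cnj (coef (b # ys))) (TP P (N - 1))"
    by (rule infsum_cong_neutral) (use True sub mem in \<open>auto simp: psi2_def\<close>)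
  also have "\<dots> = (\<Sum>ys\<in>TP P (N - 1). coef (a # ys) * cnj (coef (b # ys)))"
    using finite_TP[OF finP] by simp
  finally show ?thesis using coef_rdm True unfolding rdm1_def by auto
qed

end


definition delta :: "nat \<Rightarrow> nat \<Rightarrow> complex" where
  "delta i = (\<lambda>j. if j = i then 1 else 0)"

lemma delta_l2: "l2 (A :: nat set) (delta i)"
proof -
  have "(\<lambda>j. (norm (delta i j))\<^sup>2) summable_on ({i} \<inter> A)" by (rule summable_on_finite) simp
  then show ?thesis unfolding l2_def
    by (subst summable_on_cong_neutral[where T="{i} \<inter> A"]) (auto simp: delta_def)
qed

lemma delta_ip: "i \<in> A \<Longrightarrow> j \<in> A \<Longrightarrow> ip A (delta i) (delta j) = (if i = j then 1 else 0)"
  unfolding ip_def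
  by (subst infsum_cong_neutral[where T="{i}" and g="\<lambda>x. if i = j then 1 else 0"]) (auto simp: delta_def)

lemma ip_delta_right: "i \<in> A \<Longrightarrow> ip A v (delta i) = cnj (v i)"
  unfolding ip_def
  by (subst infsum_cong_neutral[where T="{i}" and g="\<lambda>x. cnj (v i)"]) (auto simp: delta_def)

lemma nrm2_delta: "i \<in> A \<Longrightarrow> nrm2 A (delta i) = 1"
  unfolding nrm2_def
  by (subst infsum_cong_neutral[where T="{i}" and g="\<lambda>x. 1"]) (auto simp: delta_def)

lemma count_orthonormal:
  fixes A S :: "nat set" and e :: "nat \<Rightarrow> nat \<Rightarrow> complex"
  assumes S: "finite S" "S \<subseteq> A"
    and le: "\<And>a. a < n \<Longrightarrow> l2 A (e a)"
    and on: "\<And>a b. a < n \<Longrightarrow> b < n \<Longrightarrow> ip A (e a) (e b) = (if a = b then 1 else 0)"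
    and supp: "\<And>a i. a < n \<Longrightarrow> e a i \<noteq> 0 \<Longrightarrow> i \<in> S"
  shows "n \<le> card S"
proof -
  have b: "(\<Sum>a<n. (norm (e a i))\<^sup>2) \<le> 1" if i: "i \<in> S" for i
  proof -
    have iA: "i \<in> A" using i S by auto
    have eq: "nrm2 A (\<lambda>x. delta i x - (\<Sum>a\<in>{..<n}. ip A (e a) (delta i) * e a x)) = nrm2 A (delta i) - (\<Sum>a\<in>{..<n}. (norm (ip A (e a) (delta i)))\<^sup>2)"
      by (rule bessel) (use le on delta_l2 in auto)
    have e2: "(\<Sum>a\<in>{..<n}. (norm (ip A (e a) (delta i)))\<^sup>2) = (\<Sum>a<n. (norm (e a i))\<^sup>2)"
      using ip_delta_right[OF iA] by simp
    have "0 \<le> nrm2 A (\<lambda>x. delta i x - (\<Sum>a\<in>{..<n}. ip A (e a) (delta i) * e a x))" by (rule nrm2_nonneg)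
    then show ?thesis using eq e2 nrm2_delta[OF iA] by linarith
  qed
  have n1: "nrm2 A (e a) = (\<Sum>i\<in>S. (norm (e a i))\<^sup>2)" if a: "a < n" for a
    unfolding nrm2_def
    by (subst infsum_cong_neutral[where T=S and g="\<lambda>i. (norm (e a i))\<^sup>2"]) (use S supp[OF a] in auto)
  have n2: "nrm2 A (e a) = 1" if a: "a < n" for a
    using on[OF a a] by (simp add: ip_self)
  have "real n = (\<Sum>a<n. nrm2 A (e a))" using n2 by simp
  also have "\<dots> = (\<Sum>a<n. \<Sum>i\<in>S. (norm (e a i))\<^sup>2)" using n1 by simp
  also have "\<dots> = (\<Sum>i\<in>S. \<Sum>a<n. (norm (e a i))\<^sup>2)" by (rule sum.swap)
  also have "\<dots> \<le> (\<Sum>i\<in>S. 1)" using b by (intro sum_mono) auto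
  finally show ?thesis by simp
qed

lemma diag_spectrum:
  fixes d :: nat and k' :: enat and lam :: "nat \<Rightarrow> real"
  assumes dk: "enat d \<le> k'" and mono: "\<forall>i j. i \<le> j \<longrightarrow> j < d \<longrightarrow> lam j \<le> lam i"
    and nn: "\<forall>i<d. 0 \<le> lam i"
  shows "ordered_spectrum k' (\<lambda>a b. if a = b then complex_of_real (pad d lam a) else 0) (pad d lam)"
proof -
  define D where "D = (\<lambda>a b. if a = b then complex_of_real (pad d lam a) else (0::complex))"
  let ?A = "idx k'"
  have padnn: "0 \<le> pad d lam i" for i using nn by (simp add: pad_def)
  have app: "apply_op k' D v = (\<lambda>i. if i \<in> ?A then complex_of_real (pad d lam i) * v i else 0)" for v
  proof (rule ext)
    fix i
    show "apply_op k' D v i = (if i \<in> ?A then complex_of_real (pad d lam i) * v i else 0)"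
    proof (cases "i \<in> ?A")
      case True
      have "infsum (\<lambda>j. D i j * v j) ?A = infsum (\<lambda>j. complex_of_real (pad d lam i) * v i) {i}"
        by (rule infsum_cong_neutral) (use True in \<open>auto simp: D_def\<close>)
      then show ?thesis using True by (simp add: apply_op_def)
    qed (simp add: apply_op_def)
  qed
  have eig_iff: "v \<in> eigenspace_k k' D \<mu> \<longleftrightarrow> is_vec k' v \<and> (\<forall>i. v i \<noteq> 0 \<longrightarrow> i \<in> {i. enat i < k' \<and> pad d lam i = \<mu>})"
    for v \<mu>
  proof
    assume v: "v \<in> eigenspace_k k' D \<mu>"
    then have iv: "is_vec k' v" and eq: "apply_op k' D v = (\<lambda>i. complex_of_real \<mu> * v i)"
      by (auto simp: eigenspace_k_def)
    show "is_vec k' v \<and> (\<forall>i. v i \<noteq> 0 \<longrightarrow> i \<in> {i. enat i < k' \<and> pad d lam i = \<mu>})"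
    proof (intro conjI allI impI iv)
      fix i assume vi: "v i \<noteq> 0"
      then have iA: "i \<in> ?A" using iv by (auto simp: is_vec_def)
      have "complex_of_real (pad d lam i) * v i = complex_of_real \<mu> * v i"
        using fun_cong[OF eq, of i] iA by (simp add: app)
      then have "pad d lam i = \<mu>" using vi by simp
      then show "i \<in> {i. enat i < k' \<and> pad d lam i = \<mu>}" using iA by (simp add: idx_def)
    qed
  next
    assume r: "is_vec k' v \<and> (\<forall>i. v i \<noteq> 0 \<longrightarrow> i \<in> {i. enat i < k' \<and> pad d lam i = \<mu>})"
    have "apply_op k' D v = (\<lambda>i. complex_of_real \<mu> * v i)"
    proof (rule ext)
      fix i show "apply_op k' D v i = complex_of_real \<mu> * v i"
        using r by (cases "v i = 0") (auto simp: app is_vec_def idx_def)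
    qed
    then show "v \<in> eigenspace_k k' D \<mu>" using r by (simp add: eigenspace_k_def)
  qed
  show ?thesis unfolding D_def[symmetric] ordered_spectrum_def
  proof (intro conjI allI impI)
    fix i j assume "i \<le> j" "enat j < k'"
    then show "pad d lam j \<le> pad d lam i" using mono nn by (auto simp: pad_def)
  next
    fix i show "0 \<le> pad d lam i" by (rule padnn)
  next
    fix \<mu> :: real and n :: nat assume mu: "\<mu> > 0"
    define S where "S = {i. enat i < k' \<and> pad d lam i = \<mu>}"
    have Sd: "S \<subseteq> {..<d}" using mu by (auto simp: S_def pad_def split: if_splits)
    have finS: "finite S" using Sd finite_subset by blast
    have SA: "S \<subseteq> ?A" by (auto simp: S_def idx_def)
    have "has_orthonormal_family k' (eigenspace_k k' D \<mu>) n \<longleftrightarrow> n \<le> card S"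
    proof
      assume "has_orthonormal_family k' (eigenspace_k k' D \<mu>) n"
      then obtain e where ee: "\<forall>a<n. e a \<in> eigenspace_k k' D \<mu>"
        and eo: "\<forall>a<n. \<forall>b<n. inner_k k' (e a) (e b) = (if a = b then 1 else 0)"
        unfolding has_orthonormal_family_def by blast
      show "n \<le> card S"
      proof (rule count_orthonormal[OF finS SA])
        show "\<And>a. a < n \<Longrightarrow> l2 ?A (e a)"
          using ee by (auto simp: eig_iff is_vec_def l2_def)
        show "\<And>a b. a < n \<Longrightarrow> b < n \<Longrightarrow> ip ?A (e a) (e b) = (if a = b then 1 else 0)"
          using eo by (simp add: inner_k_def ip_def)
        show "\<And>a i. a < n \<Longrightarrow> e a i \<noteq> 0 \<Longrightarrow> i \<in> S"
          using ee by (auto simp: eig_iff S_def)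
      qed
    next
      assume nS: "n \<le> card S"
      then obtain F where F: "F \<subseteq> S" "card F = n" "finite F"
        by (rule obtain_subset_with_card_n)
      obtain h where h: "bij_betw h {0..<card F} F" using ex_bij_betw_nat_finite[OF F(3)] by blast
      define e where "e a = delta (h a)" for a
      have hF: "a < n \<Longrightarrow> h a \<in> F" for a using h F by (auto simp: bij_betw_def)
      show "has_orthonormal_family k' (eigenspace_k k' D \<mu>) n"
        unfolding has_orthonormal_family_def
      proof (intro exI[of _ e] conjI allI impI)
        fix a assume a: "a < n"
        have haA: "h a \<in> ?A" using hF[OF a] F SA by auto
        show "e a \<in> eigenspace_k k' D \<mu>"
          unfolding eig_iff
        proof (intro conjI allI impI)
          show "is_vec k' (e a)" unfolding is_vec_def e_def
            using haA delta_l2[of ?A "h a"] by (auto simp: delta_def l2_def)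
          fix i assume "e a i \<noteq> 0"
          then have "i = h a" by (auto simp: e_def delta_def split: if_splits)
          then show "i \<in> {i. enat i < k' \<and> pad d lam i = \<mu>}" using hF[OF a] F by (auto simp: S_def)
        qed
        fix b assume b: "b < n"
        have hbA: "h b \<in> ?A" using hF[OF b] F SA by auto
        have "h a = h b \<longleftrightarrow> a = b" using h a b F by (auto simp: bij_betw_def inj_on_def)
        then show "inner_k k' (e a) (e b) = (if a = b then 1 else 0)"
          using delta_ip[OF haA hbA] by (simp add: inner_k_def ip_def e_def)
      qed
    qed
    then show "has_orthonormal_family k' (eigenspace_k k' D \<mu>) n \<longleftrightarrow>
          (\<exists>F. F \<subseteq> {i. enat i < k' \<and> pad d lam i = \<mu>} \<and> finite F \<and> card F = n)"
      unfolding S_def[symmetric]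
    proof -
      have "(\<exists>F. F \<subseteq> S \<and> finite F \<and> card F = n) \<longleftrightarrow> n \<le> card S"
      proof
        assume "\<exists>F. F \<subseteq> S \<and> finite F \<and> card F = n"
        then obtain F where "F \<subseteq> S" "card F = n" by blast
        then show "n \<le> card S" using finS card_mono by blast
      next
        assume "n \<le> card S"
        then obtain F where "F \<subseteq> S" "card F = n" "finite F" by (rule obtain_subset_with_card_n)
        then show "\<exists>F. F \<subseteq> S \<and> finite F \<and> card F = n" by blast
      qed
      then show "has_orthonormal_family k' (eigenspace_k k' D \<mu>) n \<longleftrightarrow> (\<exists>F. F \<subseteq> S \<and> finite F \<and> card F = n)"
        using \<open>has_orthonormal_family k' (eigenspace_k k' D \<mu>) n \<longleftrightarrow> n \<le> card S\<close> by simp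
    qed
  qed
qed



lemma reduction:
  fixes N d :: nat and k :: enat and lam :: "nat \<Rightarrow> real" and \<Psi> :: "nat list \<Rightarrow> complex"
  assumes N1: "N \<ge> 1" and FS: "fermion_state N k \<Psi>"
    and OS: "ordered_spectrum k (rdm1 N k \<Psi>) (pad d lam)"
    and dk: "enat d \<le> k" and nn: "\<forall>i<d. 0 \<le> lam i" and sm: "(\<Sum>i<d. lam i) = real N"
  shows "\<exists>\<Psi>'. \<forall>k'. enat d \<le> k' \<longrightarrow> fermion_state N k' \<Psi>' \<and>
           rdm1 N k' \<Psi>' = (\<lambda>a b. if a = b then complex_of_real (pad d lam a) else 0)"
proof -
  interpret fsl N k \<Psi> using N1 FS by unfold_locales
  define rho where "rho = rdm1 N k \<Psi>"
  define P where "P = {i. i < d \<and> 0 < lam i}"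
  have finP: "finite P" unfolding P_def by simp
  define S where "S \<mu> = {i. enat i < k \<and> pad d lam i = \<mu>}" for \<mu>
  have Sd: "S \<mu> \<subseteq> {..<d}" if "\<mu> > 0" for \<mu> using that by (auto simp: S_def pad_def split: if_splits)
  have finS: "finite (S \<mu>)" if "\<mu> > 0" for \<mu> using Sd[OF that] finite_subset by blast
  have ltk: "enat i < k" if "i < d" for i using that dk by (meson enat_ord_simps(2) less_le_trans)
  have SP: "S (lam a) = {i. i < d \<and> lam i = lam a}" if a: "a \<in> P" for a
    using a ltk by (auto simp: S_def pad_def P_def)
  have fam: "\<forall>\<mu>\<in>lam ` P. \<exists>e. (\<forall>a<card (S \<mu>). e a \<in> eigenspace_k k rho \<mu>) \<and>
      (\<forall>a<card (S \<mu>). \<forall>b<card (S \<mu>). inner_k k (e a) (e b) = (if a = b then 1 else 0))"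
  proof
    fix \<mu> assume "\<mu> \<in> lam ` P"
    then have mu: "\<mu> > 0" by (auto simp: P_def)
    have "has_orthonormal_family k (eigenspace_k k rho \<mu>) (card (S \<mu>))"
      using OS mu finS[OF mu] unfolding ordered_spectrum_def rho_def S_def by blast
    then show "\<exists>e. (\<forall>a<card (S \<mu>). e a \<in> eigenspace_k k rho \<mu>) \<and>
      (\<forall>a<card (S \<mu>). \<forall>b<card (S \<mu>). inner_k k (e a) (e b) = (if a = b then 1 else 0))"
      unfolding has_orthonormal_family_def by blast
  qed
  then obtain E where E: "\<And>\<mu>. \<mu> \<in> lam ` P \<Longrightarrow> (\<forall>a<card (S \<mu>). E \<mu> a \<in> eigenspace_k k rho \<mu>) \<and>
      (\<forall>a<card (S \<mu>). \<forall>b<card (S \<mu>). inner_k k (E \<mu> a) (E \<mu> b) = (if a = b then 1 else 0))"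
    by (metis (no_types, lifting) bchoice)
  define pos where "pos i = card {j. j < i \<and> lam j = lam i}" for i
  define f where "f i = E (lam i) (pos i)" for i
  have pos_lt: "pos a < card (S (lam a))" if a: "a \<in> P" for a
  proof -
    have "{j. j < a \<and> lam j = lam a} \<subset> S (lam a)"
      using a unfolding SP[OF a] by (auto simp: P_def)
    then show ?thesis unfolding pos_def using finS a by (auto simp: P_def intro: psubset_card_mono)
  qed
  have pos_inj: "pos a = pos b \<longleftrightarrow> a = b" if a: "a \<in> P" and b: "b \<in> P" and ab: "lam a = lam b" for a b
  proof -
    have lt: "pos x < pos y" if "x < y" "lam x = lam y" for x y
    proof -
      have "{j. j < x \<and> lam j = lam x} \<subset> {j. j < y \<and> lam j = lam y}" using that by auto
      then show ?thesis unfolding pos_def by (intro psubset_card_mono) auto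
    qed
    show ?thesis using lt[of a b] lt[of b a] ab by (metis less_irrefl linorder_neqE_nat)
  qed
  have eig: "f a \<in> eigenspace_k k rho (lam a)" if a: "a \<in> P" for a
    using E[of "lam a"] a pos_lt[OF a] unfolding f_def by auto
  have l2f: "l2 (idx k) (f a)" if a: "a \<in> P" for a
    using eig[OF a] by (simp add: eigenspace_k_def is_vec_def l2_def)
  have eigf: "apply_op k (rdm1 N k \<Psi>) (f a) = (\<lambda>i. complex_of_real (lam a) * f a i)" if a: "a \<in> P" for a
    using eig[OF a] by (simp add: eigenspace_k_def rho_def)
  have same: "ip (idx k) (f a) (f b) = (if a = b then 1 else 0)" if a: "a \<in> P" and b: "b \<in> P" and ab: "lam a = lam b" for a b
  proof -
    have mem: "lam a \<in> lam ` P" using a by blast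
    have o: "\<forall>x<card (S (lam a)). \<forall>y<card (S (lam a)). inner_k k (E (lam a) x) (E (lam a) y) = (if x = y then 1 else 0)"
      using E[OF mem] by blast
    have "pos b < card (S (lam a))" using pos_lt[OF b] ab by simp
    then have "inner_k k (E (lam a) (pos a)) (E (lam a) (pos b)) = (if pos a = pos b then 1 else 0)"
      using o pos_lt[OF a] by blast
    then have "inner_k k (f a) (f b) = (if pos a = pos b then 1 else 0)"
      unfolding f_def using ab by simp
    then show ?thesis using pos_inj[OF a b ab] by (simp add: inner_k_ip)
  qed
  have onf: "ip (idx k) (f a) (f b) = (if a = b then 1 else 0)" if a: "a \<in> P" and b: "b \<in> P" for a b
  proof (cases "lam a = lam b")
    case True then show ?thesis using same a b by blast
  next
    case False
    have "ip (idx k) (f a) (f b) = 0"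
      by (rule herm_orth[OF l2f[OF a] _ l2f[OF b] _ eigf[OF a] eigf[OF b] False])
         (use same a b in auto)
    then show ?thesis using False by auto
  qed
  have sumP: "(\<Sum>a\<in>P. lam a) = real N"
  proof -
    have "(\<Sum>a\<in>P. lam a) = (\<Sum>i<d. lam i)"
      by (rule sum.mono_neutral_left) (use nn in \<open>auto simp: P_def not_less\<close>)
    then show ?thesis using sm by simp
  qed
  interpret eig N k \<Psi> P f lam
    by unfold_locales (use finP l2f onf eigf sumP in auto)
  show ?thesis
  proof (intro exI[of _ psi2] allI impI conjI)
    fix k' :: enat assume dk': "enat d \<le> k'"
    have Pk: "P \<subseteq> idx k'" using dk' unfolding P_def idx_def
      by auto (meson enat_ord_simps(2) less_le_trans)
    show "fermion_state N k' psi2" by (rule psi2_fermion[OF Pk])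
    show "rdm1 N k' psi2 = (\<lambda>a b. if a = b then complex_of_real (pad d lam a) else 0)"
    proof (intro ext)
      fix a b
      have "(if a = b \<and> a \<in> P then complex_of_real (lam a) else 0) = (if a = b then complex_of_real (pad d lam a) else 0)"
        using nn by (auto simp: P_def pad_def not_less)
      then show "rdm1 N k' psi2 a b = (if a = b then complex_of_real (pad d lam a) else 0)"
        using psi2_rdm[OF Pk, of a b] by simp
    qed
  qed
qed

theorem lemma1:
  fixes N d :: nat and d' :: enat and lam :: "nat \<Rightarrow> real"
  assumes "N \<ge> 1"
    and "enat d < d'"
    and "\<forall>i<d. lam i \<le> 1"
    and "\<forall>i j. i \<le> j \<longrightarrow> j < d \<longrightarrow> lam j \<le> lam i"
    and "\<forall>i<d. 0 \<le> lam i"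
    and "(\<Sum>i<d. lam i) = real N"
  shows "compatible N (enat d) (pad d lam) \<longleftrightarrow> compatible N d' (pad d lam)"
proof -
  have gen: "compatible N k' (pad d lam)" if c: "compatible N k (pad d lam)" and dk: "enat d \<le> k" and dk': "enat d \<le> k'" for k k'
  proof -
    from c obtain \<Psi> where FS: "fermion_state N k \<Psi>" and OS: "ordered_spectrum k (rdm1 N k \<Psi>) (pad d lam)"
      unfolding compatible_def by blast
    obtain \<Psi>' where H: "\<forall>k'. enat d \<le> k' \<longrightarrow> fermion_state N k' \<Psi>' \<and>
           rdm1 N k' \<Psi>' = (\<lambda>a b. if a = b then complex_of_real (pad d lam a) else 0)"
      using reduction[OF assms(1) FS OS dk assms(5,6)] by blast
    have "ordered_spectrum k' (rdm1 N k' \<Psi>') (pad d lam)"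
      using H dk' diag_spectrum[OF dk' assms(4,5)] by simp
    then show ?thesis unfolding compatible_def using H dk' by blast
  qed
  have dd': "enat d \<le> d'" using assms(2) by simp
  show ?thesis using gen[OF _ order_refl dd'] gen[OF _ dd' order_refl] by blast
qed

end
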